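(* For the redundancy-$d$ COC model described in the context, in stationarity and assuming stability, with $C=\binom Kd$ and $\pi((0))$ the stationary probability of the empty system, for complex $|z|<1$ $$\mathbb E[z^M]=\sum_{i=0}^{C}\sum_{(T_1,\dots,T_i)}\frac{(\lambda z)^i\pi((0))}{\prod_{j=1}^i\big(\mu C F_j(T_1,\dots,T_j)-j\lambda z\big)},$$ and the sojourn time $S$ of an arbitrary customer satisfies, for $\operatorname{Re}(s)>0$ and with $t_1$ any fixed token, $$\mathbb E[e^{-sS}]=\sum_{i=0}^{C}\sum_{(T_1,\dots,T_i)}\frac{\lambda-sC\mathbf 1\{t_1\in\{T_1,\dots,T_i\}\}}{\lambda}\cdot\frac{\lambda^i\pi((0))}{\prod_{j=1}^i\big(\mu CF_j(T_1,\dots,T_j)-j\lambda+sC\mathbf 1\{t_1\in\{T_1,\dots,T_j\}\}\big)},$$ where $M$ is the number of customers in the system and the sums run over ordered tuples of distinct tokens.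
   Context: Redundancy-$d$ COC model: $K$ homogeneous servers, each with its own FCFS queue, serving at exponential rate $\mu$. Customers arrive as a Poisson process with rate $\lambda$; each picks a uniformly random set of $d$ of the $K$ servers and sends a copy to each, copies having independent exponential($\mu$) service requirements; when any copy completes, all copies of that customer are removed. Customer types correspond to the $\binom Kd$ server subsets, each with arrival rate $\lambda/\binom Kd$. Token representation: one token per type, held by the oldest customer of that type present; the tokens are $t_1,\dots,t_{\binom Kd}$. State: $(0)$ or $(T_1,n_1,\dots,T_i,n_i)$ with $T_1,\dots,T_i$ distinct held tokens ordered by arrival of their holders and $n_j$ the number of non-holding customers arriving between holders of $T_j$ and $T_{j+1}$. $F_j(T_1,\dots,T_j)$ denotes the number of servers in the union of the server sets of the types corresponding to $T_1,\dots,T_j$. *)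

theory Defs
  imports "HOL-Analysis.Analysis"
begin

text \<open>Servers are 0..K-1; a customer type is a d-subset of servers.
  A system state is the list of types of customers present, in order of arrival
  (oldest first).\<close>

definition Types :: "nat \<Rightarrow> nat \<Rightarrow> nat set set" where
  "Types K d = {A. A \<subseteq> {..<K} \<and> card A = d}"

definition States :: "nat \<Rightarrow> nat \<Rightarrow> nat set list set" where
  "States K d = {xs. set xs \<subseteq> Types K d}"

text \<open>Departure rate of the j-th customer (0-based, in arrival order): each server
  serves (FCFS) the oldest customer holding a copy there, at rate mu; a customer
  is therefore in service at the servers of its type not used by older customers.\<close>
definition svc_rate :: "real \<Rightarrow> nat set list \<Rightarrow> nat \<Rightarrow> real" where
  "svc_rate mu xs j = mu * real (card (xs ! j - \<Union> (set (take j xs))))"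

definition ins_at :: "nat \<Rightarrow> 'a \<Rightarrow> 'a list \<Rightarrow> 'a list" where
  "ins_at j T xs = take j xs @ T # drop j xs"

definition del_at :: "nat \<Rightarrow> 'a list \<Rightarrow> 'a list" where
  "del_at j xs = take j xs @ drop (Suc j) xs"

text \<open>Stationary distribution of the CTMC (global balance equations); arrivals of
  each type at rate lam / (K choose d).\<close>
definition stationary_dist ::
  "nat \<Rightarrow> nat \<Rightarrow> real \<Rightarrow> real \<Rightarrow> (nat set list \<Rightarrow> real) \<Rightarrow> bool" where
  "stationary_dist K d lam mu p \<longleftrightarrow>
     (\<forall>xs\<in>States K d. p xs \<ge> 0) \<and> (p has_sum 1) (States K d) \<and>
     (\<forall>xs\<in>States K d.
        p xs * (lam + (\<Sum>j<length xs. svc_rate mu xs j)) =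
          (if xs = [] then 0 else p (butlast xs) * lam / real (K choose d))
          + (\<Sum>j\<le>length xs. \<Sum>T\<in>Types K d.
               p (ins_at j T xs) * svc_rate mu (ins_at j T xs) j))"

text \<open>Laplace--Stieltjes transform of the remaining sojourn time of the tagged
  customer (the last one in the list), by first-step analysis.  Customers that
  arrive later never affect the tagged customer, so only those ahead matter.
  The first argument n is fuel, equal to the length of the list.\<close>
fun tagged_lt_aux :: "real \<Rightarrow> complex \<Rightarrow> nat \<Rightarrow> nat set list \<Rightarrow> complex" where
  "tagged_lt_aux mu s 0 xs = 1"
| "tagged_lt_aux mu s (Suc n) xs =
     (complex_of_real (svc_rate mu xs (length xs - 1))
      + (\<Sum>j<length xs - 1. complex_of_real (svc_rate mu xs j)
                              * tagged_lt_aux mu s n (del_at j xs)))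
     / (complex_of_real (\<Sum>j<length xs. svc_rate mu xs j) + s)"

definition tagged_lt :: "real \<Rightarrow> complex \<Rightarrow> nat set list \<Rightarrow> complex" where
  "tagged_lt mu s xs = tagged_lt_aux mu s (length xs) xs"

definition gen_fun_M :: "nat \<Rightarrow> nat \<Rightarrow> (nat set list \<Rightarrow> real) \<Rightarrow> complex \<Rightarrow> complex" where
  "gen_fun_M K d p z = (\<Sum>\<^sub>\<infinity>xs\<in>States K d. complex_of_real (p xs) * z ^ length xs)"

text \<open>E[exp(-sS)] for an arbitrary customer: by PASTA it sees the stationary state
  and has a uniformly random type.\<close>
definition sojourn_LST ::
  "nat \<Rightarrow> nat \<Rightarrow> real \<Rightarrow> (nat set list \<Rightarrow> real) \<Rightarrow> complex \<Rightarrow> complex" where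
  "sojourn_LST K d mu p s =
     (\<Sum>\<^sub>\<infinity>xs\<in>States K d. complex_of_real (p xs) *
        ((\<Sum>T\<in>Types K d. tagged_lt mu s (xs @ [T])) / of_nat (K choose d)))"

definition Tuples :: "nat \<Rightarrow> nat \<Rightarrow> nat \<Rightarrow> nat set list set" where
  "Tuples K d i = {ts. distinct ts \<and> set ts \<subseteq> Types K d \<and> length ts = i}"

definition F :: "nat set list \<Rightarrow> nat \<Rightarrow> nat" where
  "F ts j = card (\<Union> (set (take j ts)))"

end

theory Submission
  imports Defs "HOL-Complex_Analysis.Complex_Analysis"
begin

definition UU :: "nat set list \<Rightarrow> nat set" where
  "UU xs = \<Union> (set xs)"

lemma UU_simps[simp]: "UU [] = {}" "UU (t # xs) = t \<union> UU xs" "UU (xs @ ys) = UU xs \<union> UU ys"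
  by (auto simp: UU_def)

lemma finite_Types: "finite (Types K d)"
proof -
  have "Types K d \<subseteq> Pow {..<K}" by (auto simp: Types_def)
  then show ?thesis by (rule finite_subset) simp
qed

lemma card_Types: "card (Types K d) = K choose d"
  unfolding Types_def using n_subsets[of "{..<K}" d] by simp

lemma Types_finite_elem: "t \<in> Types K d \<Longrightarrow> finite t"
  unfolding Types_def by (auto intro: finite_subset)

lemma Types_card: "t \<in> Types K d \<Longrightarrow> card t = d"
  unfolding Types_def by auto

lemma Types_sub: "t \<in> Types K d \<Longrightarrow> t \<subseteq> {..<K}"
  unfolding Types_def by auto

lemma Types_ne: "1 \<le> d \<Longrightarrow> t \<in> Types K d \<Longrightarrow> t \<noteq> {}"
  unfolding Types_def by auto

lemma finite_UU: "set xs \<subseteq> Types K d \<Longrightarrow> finite (UU xs)"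
  by (induction xs) (auto simp: Types_finite_elem)

lemma UU_sub: "set xs \<subseteq> Types K d \<Longrightarrow> UU xs \<subseteq> {..<K}"
  by (induction xs) (auto dest: Types_sub)

lemma svc_rate_alt: "svc_rate mu xs j = mu * real (card (xs ! j - UU (take j xs)))"
  by (simp add: svc_rate_def UU_def)

lemma svc_rate_snoc: "j < length xs \<Longrightarrow> svc_rate mu (xs @ [t]) j = svc_rate mu xs j"
  by (simp add: svc_rate_alt nth_append)

lemma svc_rate_snoc_last: "svc_rate mu (xs @ [t]) (length xs) = mu * real (card (t - UU xs))"
  by (simp add: svc_rate_alt nth_append)

lemma card_Un_diff_split: "finite A \<Longrightarrow> finite B \<Longrightarrow> card (A \<union> B) = card A + card (B - A)"
proof -
  assume "finite A" "finite B"
  have "A \<union> B = A \<union> (B - A)" by auto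
  then show ?thesis using \<open>finite A\<close> \<open>finite B\<close>
    by (metis Diff_disjoint card_Un_disjoint finite_Diff)
qed

lemma D_eq:
  assumes "set xs \<subseteq> Types K d"
  shows "(\<Sum>j<length xs. svc_rate mu xs j) = mu * real (card (UU xs))"
  using assms
proof (induction xs rule: rev_induct)
  case Nil then show ?case by simp
next
  case (snoc t xs)
  have fx: "finite (UU xs)" using snoc.prems by (intro finite_UU[of _ K d]) auto
  have ft: "finite t" using snoc.prems by (auto intro: Types_finite_elem)
  have "(\<Sum>j<length (xs @ [t]). svc_rate mu (xs @ [t]) j)
        = (\<Sum>j<length xs. svc_rate mu xs j) + mu * real (card (t - UU xs))"
    by (simp add: svc_rate_snoc svc_rate_snoc_last)
  also have "\<dots> = mu * real (card (UU xs)) + mu * real (card (t - UU xs))"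
    using snoc by simp
  also have "\<dots> = mu * real (card (UU (xs @ [t])))"
    using card_Un_diff_split[OF fx ft] by (simp add: algebra_simps)
  finally show ?case .
qed

fun wt :: "(nat set \<Rightarrow> 'a::field) \<Rightarrow> nat set \<Rightarrow> nat set list \<Rightarrow> 'a" where
  "wt h V [] = 1"
| "wt h V (t # b) = h t / of_nat (card (V \<union> t)) * wt h (V \<union> t) b"

lemma wt_append: "wt h V (a @ b) = wt h V a * wt h (V \<union> UU a) b"
  by (induction a arbitrary: V) (auto simp: Un_assoc)

lemma wt_snoc: "wt h V (a @ [t]) = wt h V a * (h t / of_nat (card (V \<union> UU a \<union> t)))"
  by (simp add: wt_append)

lemma wt_cover:
  "(\<forall>t\<in>set a. t \<subseteq> V) \<Longrightarrow> wt h V a = prod_list (map (\<lambda>t. h t / of_nat (card V)) a)"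
proof (induction a)
  case Nil then show ?case by simp
next
  case (Cons t a)
  then have "V \<union> t = V" by auto
  with Cons show ?case by simp
qed

lemma wt_of_real: "(of_real (wt h V b) :: 'a::real_normed_field) = wt (\<lambda>t. of_real (h t)) V b"
  by (induction b arbitrary: V) (simp_all add: of_real_mult of_real_divide)

lemma wt_count:
  "wt (\<lambda>t. c * (if t = T then z else 1)) V b = wt (\<lambda>_. c) V b * z ^ count_list b T"
  by (induction b arbitrary: V) (auto simp: algebra_simps)

lemma wt_pos:
  fixes c :: real
  assumes "c > 0" "set b \<subseteq> Types K d" "1 \<le> d" "finite V"
  shows "wt (\<lambda>_. c) V b > 0"
  using assms(2,4)
proof (induction b arbitrary: V)
  case Nil then show ?case by simp
next
  case (Cons t b)
  have "t \<noteq> {}" "finite t" using Cons.prems assms(3) Types_ne[of d t K] Types_finite_elem[of t K d] by auto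
  then have "card (V \<union> t) > 0" using Cons.prems by (auto simp: card_gt_0_iff)
  moreover have "wt (\<lambda>_. c) (V \<union> t) b > 0" using Cons.IH Cons.prems \<open>finite t\<close> by auto
  ultimately show ?case using assms(1) by simp
qed

lemma norm_wt: "norm (wt h V b) = wt (\<lambda>t. norm (h t)) V b"
  for h :: "nat set \<Rightarrow> complex"
  by (induction b arbitrary: V) (simp_all add: norm_mult norm_divide)


lemma ins_at_0[simp]: "ins_at 0 t xs = t # xs"
  by (simp add: ins_at_def)

lemma ins_at_Suc_Cons[simp]: "ins_at (Suc j) t (a # xs) = a # ins_at j t xs"
  by (simp add: ins_at_def)

lemma length_ins_at[simp]: "j \<le> length xs \<Longrightarrow> length (ins_at j t xs) = Suc (length xs)"
  by (simp add: ins_at_def)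

lemma nth_ins_at[simp]: "j \<le> length xs \<Longrightarrow> ins_at j t xs ! j = t"
  by (simp add: ins_at_def nth_append)

lemma take_ins_at[simp]: "j \<le> length xs \<Longrightarrow> take j (ins_at j t xs) = take j xs"
  by (simp add: ins_at_def)

lemma set_ins_at[simp]: "set (ins_at j t xs) = insert t (set xs)"
  unfolding ins_at_def by (metis append_take_drop_id set_append set_simps(2) Un_insert_right insert_commute
      Un_insert_left)

lemma del_ins_at[simp]: "j \<le> length xs \<Longrightarrow> del_at j (ins_at j t xs) = xs"
  by (simp add: ins_at_def del_at_def)

lemma ins_del_at: "j < length y \<Longrightarrow> ins_at j (y ! j) (del_at j y) = y"
  unfolding ins_at_def del_at_def
  by (simp add: Cons_nth_drop_Suc min_def)

lemma length_del_at[simp]: "j < length y \<Longrightarrow> length (del_at j y) = length y - 1"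
  by (simp add: del_at_def)

lemma set_del_at: "set (del_at j y) \<subseteq> set y"
  unfolding del_at_def by (auto dest: in_set_takeD in_set_dropD)

lemma ins_at_snoc: "j \<le> length xs \<Longrightarrow> ins_at j t (xs @ [T]) = ins_at j t xs @ [T]"
  by (simp add: ins_at_def)

lemma del_at_snoc: "j < length xs \<Longrightarrow> del_at j (xs @ [T]) = del_at j xs @ [T]"
  by (simp add: del_at_def)

fun G :: "nat set \<Rightarrow> nat set \<Rightarrow> nat set list \<Rightarrow> real" where
  "G t V [] = 1"
| "G t V (a # x) = real (card (V \<union> a)) / real (card (V \<union> a \<union> t)) * G t (V \<union> a) x"

definition okl :: "nat set list \<Rightarrow> bool" where
  "okl x \<longleftrightarrow> (\<forall>a\<in>set x. finite a \<and> a \<noteq> {})"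

lemma okl_simps[simp]: "okl []" "okl (a # x) \<longleftrightarrow> finite a \<and> a \<noteq> {} \<and> okl x"
  by (auto simp: okl_def)

lemma card_pos_Un: "finite V \<Longrightarrow> finite a \<Longrightarrow> a \<noteq> {} \<Longrightarrow> card (V \<union> a) > 0"
  by (simp add: card_gt_0_iff)

lemma wt_shift:
  fixes c :: real
  assumes "finite V" "okl x" "finite t"
  shows "wt (\<lambda>_. c) (V \<union> t) x = wt (\<lambda>_. c) V x * G t V x"
  using assms(1,2)
proof (induction x arbitrary: V)
  case Nil then show ?case by simp
next
  case (Cons a x)
  have fa: "finite a" "a \<noteq> {}" "okl x" using Cons.prems by auto
  have P: "card (V \<union> a) > 0" using card_pos_Un[OF Cons.prems(1) fa(1,2)] .
  have e: "V \<union> t \<union> a = V \<union> a \<union> t" by auto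
  have IH: "wt (\<lambda>_. c) (V \<union> a \<union> t) x = wt (\<lambda>_. c) (V \<union> a) x * G t (V \<union> a) x"
    using Cons.IH[of "V \<union> a"] Cons.prems fa by simp
  show ?case using P by (simp add: e IH)
qed

lemma E_lemma:
  fixes c :: real
  assumes "finite V" "okl x" "finite t" "t \<noteq> {}"
  shows "(\<Sum>j\<le>length x. wt (\<lambda>_. c) V (ins_at j t x) * real (card (t - (V \<union> UU (take j x)))))
         = c * wt (\<lambda>_. c) V x * (1 - real (card V) / real (card (V \<union> t)) * G t V x)"
  using assms(1,2)
proof (induction x arbitrary: V)
  case Nil
  have R: "card (V \<union> t) > 0" using card_pos_Un[OF Nil.prems(1) assms(3,4)] .
  have e: "real (card (t - V)) = real (card (V \<union> t)) - real (card V)"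
    using card_Un_diff_split[OF Nil.prems(1) assms(3)] by simp
  have "(\<Sum>j\<le>length []. wt (\<lambda>_. c) V (ins_at j t []) * real (card (t - (V \<union> UU (take j [])))))
     = c / real (card (V \<union> t)) * (real (card (V \<union> t)) - real (card V))"
    using e by simp
  also have "\<dots> = c * wt (\<lambda>_. c) V [] * (1 - real (card V) / real (card (V \<union> t)) * G t V [])"
    using R by (simp add: field_simps)
  finally show ?case .
next
  case (Cons a x)
  have fa: "finite a" "a \<noteq> {}" "okl x" using Cons.prems by auto
  have fVa: "finite (V \<union> a)" using Cons.prems fa by auto
  define P where "P = real (card (V \<union> a))"
  define Q where "Q = real (card (V \<union> a \<union> t))"
  define R where "R = real (card (V \<union> t))"
  define S where "S = real (card V)"
  define W where "W = wt (\<lambda>_. c) (V \<union> a) x"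
  define g where "g = G t (V \<union> a) x"
  have Pp: "P > 0" unfolding P_def using card_pos_Un[OF Cons.prems(1) fa(1,2)] by simp
  have Qp: "Q > 0" unfolding Q_def using card_pos_Un[OF fVa assms(3,4)] by simp
  have Rp: "R > 0" unfolding R_def using card_pos_Un[OF Cons.prems(1) assms(3,4)] by simp
  have RS: "real (card (t - V)) = R - S"
    using card_Un_diff_split[OF Cons.prems(1) assms(3)] unfolding R_def S_def by simp
  have sh: "wt (\<lambda>_. c) (V \<union> t) (a # x) = c * W * g / Q"
    using wt_shift[OF Cons.prems(1) Cons.prems(2) assms(3), of c] Pp
    unfolding W_def g_def P_def Q_def by (simp add: field_simps)
  have f0: "wt (\<lambda>_. c) V (ins_at 0 t (a # x)) * real (card (t - (V \<union> UU (take 0 (a # x)))))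
      = c * c * W * g * (R - S) / (Q * R)"
  proof -
    have "wt (\<lambda>_. c) V (ins_at 0 t (a # x)) * real (card (t - (V \<union> UU (take 0 (a # x)))))
        = c / R * wt (\<lambda>_. c) (V \<union> t) (a # x) * (R - S)"
      using RS unfolding R_def by simp
    also have "\<dots> = c / R * (c * W * g / Q) * (R - S)" by (simp only: sh)
    also have "\<dots> = c * c * W * g * (R - S) / (Q * R)" using Rp Qp by (simp add: field_simps)
    finally show ?thesis .
  qed
  have fS: "(\<Sum>j\<le>length x. wt (\<lambda>_. c) V (ins_at (Suc j) t (a # x)) *
              real (card (t - (V \<union> UU (take (Suc j) (a # x))))))
      = c / P * (\<Sum>j\<le>length x. wt (\<lambda>_. c) (V \<union> a) (ins_at j t x) *
              real (card (t - ((V \<union> a) \<union> UU (take j x)))))"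
    unfolding P_def sum_distrib_left by (intro sum.cong) (auto simp: Un_assoc)
  also have "\<dots> = c / P * (c * W * (1 - P / Q * g))"
    using Cons.IH[OF fVa fa(3)] unfolding W_def g_def P_def Q_def by simp
  finally have fS': "(\<Sum>j\<le>length x. wt (\<lambda>_. c) V (ins_at (Suc j) t (a # x)) *
              real (card (t - (V \<union> UU (take (Suc j) (a # x)))))) = c / P * (c * W * (1 - P / Q * g))" .
  have "(\<Sum>j\<le>length (a # x). wt (\<lambda>_. c) V (ins_at j t (a # x)) * real (card (t - (V \<union> UU (take j (a # x))))))
      = c * c * W * g * (R - S) / (Q * R) + c / P * (c * W * (1 - P / Q * g))"
    by (simp only: length_Cons sum.atMost_Suc_shift f0 fS')
  also have "\<dots> = c * (c / P * W) * (1 - S / R * (P / Q * g))"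
    using Pp Qp Rp by (simp add: field_simps)
  also have "\<dots> = c * wt (\<lambda>_. c) V (a # x) * (1 - real (card V) / real (card (V \<union> t)) * G t V (a # x))"
    unfolding W_def g_def P_def Q_def R_def S_def by simp
  finally show ?case .
qed

locale coc =
  fixes K d :: nat and lam mu :: real
  assumes d1: "1 \<le> d" and dK: "d \<le> K" and lam_pos: "lam > 0" and mu_pos: "mu > 0"
begin

abbreviation "Ty \<equiv> Types K d"
abbreviation "St \<equiv> States K d"

definition CC :: nat where "CC = K choose d"
definition cc :: real where "cc = lam / (real CC * mu)"
definition w :: "nat set list \<Rightarrow> real" where "w x = wt (\<lambda>_. cc) {} x"

lemma CC_pos: "CC > 0"
  unfolding CC_def using dK by simp

lemma card_Ty: "card Ty = CC"
  by (simp add: card_Types CC_def)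

lemma cc_pos: "cc > 0"
  unfolding cc_def using CC_pos lam_pos mu_pos by simp

lemma cc_mu: "cc * mu = lam / real CC"
  unfolding cc_def using mu_pos by simp

lemma okl_St: "set x \<subseteq> Ty \<Longrightarrow> okl x"
  unfolding okl_def using d1 Types_finite_elem Types_ne by blast

lemma Ty_fin: "t \<in> Ty \<Longrightarrow> finite t" by (rule Types_finite_elem)
lemma Ty_ne: "t \<in> Ty \<Longrightarrow> t \<noteq> {}" using d1 by (rule Types_ne)

lemma w_pos: "set x \<subseteq> Ty \<Longrightarrow> w x > 0"
  unfolding w_def using wt_pos[OF cc_pos _ d1, of x K "{}"] by simp

lemma svc_rate_ins: "j \<le> length x \<Longrightarrow>
   svc_rate mu (ins_at j t x) j = mu * real (card (t - UU (take j x)))"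
  by (simp add: svc_rate_alt)

lemma partial_bal:
  assumes "set x \<subseteq> Ty" "t \<in> Ty"
  shows "(\<Sum>j\<le>length x. w (ins_at j t x) * svc_rate mu (ins_at j t x) j) = w x * lam / real CC"
proof -
  have "(\<Sum>j\<le>length x. w (ins_at j t x) * svc_rate mu (ins_at j t x) j)
      = mu * (\<Sum>j\<le>length x. wt (\<lambda>_. cc) {} (ins_at j t x) * real (card (t - ({} \<union> UU (take j x)))))"
    unfolding sum_distrib_left w_def by (intro sum.cong) (auto simp: svc_rate_ins)
  also have "\<dots> = mu * (cc * w x)"
    using E_lemma[of "{}" x t cc] okl_St[OF assms(1)] Ty_fin[OF assms(2)] Ty_ne[OF assms(2)]
    by (simp add: w_def)
  also have "\<dots> = (cc * mu) * w x" by (simp add: ac_simps)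
  also have "\<dots> = w x * lam / real CC" using cc_mu by simp
  finally show ?thesis .
qed

lemma D_St: "set x \<subseteq> Ty \<Longrightarrow> (\<Sum>j<length x. svc_rate mu x j) = mu * real (card (UU x))"
  by (rule D_eq)

lemma w_snoc: "set x \<subseteq> Ty \<Longrightarrow> w (x @ [t]) = w x * (cc / real (card (UU x \<union> t)))"
  unfolding w_def by (simp add: wt_snoc)

lemma card_UU_pos: "set x \<subseteq> Ty \<Longrightarrow> x \<noteq> [] \<Longrightarrow> card (UU x) > 0"
proof -
  assume a: "set x \<subseteq> Ty" "x \<noteq> []"
  then obtain t where t: "t \<in> set x" by (cases x) auto
  then have "t \<subseteq> UU x" "t \<noteq> {}" using a Ty_ne by (auto simp: UU_def)
  moreover have "finite (UU x)" using finite_UU[OF a(1)] .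
  ultimately show ?thesis by (auto simp: card_gt_0_iff)
qed

lemma partial_bal1:
  assumes "set x \<subseteq> Ty" "x \<noteq> []"
  shows "w x * (mu * real (card (UU x))) = w (butlast x) * lam / real CC"
proof -
  obtain y t where x: "x = y @ [t]" using assms(2) by (cases x rule: rev_cases) auto
  have y: "set y \<subseteq> Ty" using assms x by auto
  have p: "card (UU x) > 0" using card_UU_pos[OF assms] .
  have "w x = w y * (cc / real (card (UU x)))" using w_snoc[OF y, of t] x by simp
  then have "w x * (mu * real (card (UU x))) = (cc * mu) * w y" using p by (simp add: field_simps)
  also have "\<dots> = w (butlast x) * lam / real CC" using cc_mu x by simp
  finally show ?thesis .
qed

lemma full_bal_w:
  assumes "x \<in> St"
  shows "w x * (lam + (\<Sum>j<length x. svc_rate mu x j)) =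
          (if x = [] then 0 else w (butlast x) * lam / real CC)
          + (\<Sum>j\<le>length x. \<Sum>T\<in>Ty. w (ins_at j T x) * svc_rate mu (ins_at j T x) j)"
proof -
  have x: "set x \<subseteq> Ty" using assms by (simp add: States_def)
  have "(\<Sum>j\<le>length x. \<Sum>T\<in>Ty. w (ins_at j T x) * svc_rate mu (ins_at j T x) j)
      = (\<Sum>T\<in>Ty. \<Sum>j\<le>length x. w (ins_at j T x) * svc_rate mu (ins_at j T x) j)"
    by (rule sum.swap)
  also have "\<dots> = (\<Sum>T\<in>Ty. w x * lam / real CC)"
    using partial_bal[OF x] by simp
  also have "\<dots> = w x * lam" using card_Ty CC_pos by simp
  finally have dep: "(\<Sum>j\<le>length x. \<Sum>T\<in>Ty. w (ins_at j T x) * svc_rate mu (ins_at j T x) j) = w x * lam" .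
  have arr: "w x * (mu * real (card (UU x))) = (if x = [] then 0 else w (butlast x) * lam / real CC)"
    using partial_bal1[OF x] by (cases "x = []") simp_all
  show ?thesis using dep arr D_St[OF x] by (simp add: algebra_simps)
qed

end


context coc
begin

definition Lv :: "nat \<Rightarrow> nat set list set" where
  "Lv n = {x. set x \<subseteq> Ty \<and> length x = n}"

lemma finite_Lv: "finite (Lv n)"
  unfolding Lv_def using finite_lists_length_eq[OF finite_Types] .

lemma Lv_St: "x \<in> Lv n \<Longrightarrow> x \<in> St"
  by (simp add: Lv_def States_def)

definition Dr :: "nat set list \<Rightarrow> real" where
  "Dr x = (\<Sum>j<length x. svc_rate mu x j)"

definition arrf :: "(nat set list \<Rightarrow> real) \<Rightarrow> nat set list \<Rightarrow> real" where
  "arrf f x = (if x = [] then 0 else f (butlast x) * lam / real CC)"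

definition depf :: "(nat set list \<Rightarrow> real) \<Rightarrow> nat set list \<Rightarrow> real" where
  "depf f x = (\<Sum>j\<le>length x. \<Sum>T\<in>Ty. f (ins_at j T x) * svc_rate mu (ins_at j T x) j)"

definition bal :: "(nat set list \<Rightarrow> real) \<Rightarrow> bool" where
  "bal f \<longleftrightarrow> (\<forall>x\<in>St. f x * (lam + Dr x) = arrf f x + depf f x)"

lemma svc_rate_nonneg: "svc_rate mu x j \<ge> 0"
  using mu_pos by (simp add: svc_rate_def)

lemma Dr_nonneg: "Dr x \<ge> 0"
  unfolding Dr_def by (intro sum_nonneg svc_rate_nonneg)

lemma bal_w: "bal w"
  unfolding bal_def Dr_def arrf_def depf_def using full_bal_w by blast

lemma bal_stat:
  assumes "stationary_dist K d lam mu p" shows "bal p"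
  using assms unfolding stationary_dist_def bal_def Dr_def arrf_def depf_def card_Types CC_def
  by auto

lemma arrf_diff: "arrf (\<lambda>x. f x - g x) x = arrf f x - arrf g x"
  unfolding arrf_def by (simp add: diff_divide_distrib left_diff_distrib)

lemma depf_diff: "depf (\<lambda>x. f x - g x) x = depf f x - depf g x"
  unfolding depf_def by (simp add: left_diff_distrib sum_subtractf)

lemma bal_diff:
  assumes "bal f" "bal g" shows "bal (\<lambda>x. f x - g x)"
  unfolding bal_def
proof
  fix x assume x: "x \<in> St"
  have "(f x - g x) * (lam + Dr x) = f x * (lam + Dr x) - g x * (lam + Dr x)" by (simp add: left_diff_distrib)
  also have "\<dots> = (arrf f x + depf f x) - (arrf g x + depf g x)" using assms x by (simp add: bal_def)
  finally show "(f x - g x) * (lam + Dr x) = arrf (\<lambda>x. f x - g x) x + depf (\<lambda>x. f x - g x) x"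
    by (simp add: arrf_diff depf_diff)
qed

lemma bal_scale:
  assumes "bal f" shows "bal (\<lambda>x. a * f x)"
proof -
  have "arrf (\<lambda>x. a * f x) x = a * arrf f x" "depf (\<lambda>x. a * f x) x = a * depf f x" for x
    unfolding arrf_def depf_def by (auto simp: sum_distrib_left algebra_simps)
  show ?thesis unfolding bal_def
  proof
    fix x assume x: "x \<in> St"
    have "a * f x * (lam + Dr x) = a * (f x * (lam + Dr x))" by simp
    also have "\<dots> = a * (arrf f x + depf f x)" using assms x by (simp add: bal_def)
    finally show "a * f x * (lam + Dr x) = arrf (\<lambda>x. a * f x) x + depf (\<lambda>x. a * f x) x"
      by (simp add: \<open>\<And>x. arrf (\<lambda>x. a * f x) x = a * arrf f x\<close> \<open>\<And>x. depf (\<lambda>x. a * f x) x = a * depf f x\<close> distrib_left)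
  qed
qed

lemma ins_at_St: "x \<in> St \<Longrightarrow> T \<in> Ty \<Longrightarrow> ins_at j T x \<in> St"
  by (simp add: States_def)

lemma butlast_St: "x \<in> St \<Longrightarrow> butlast x \<in> St"
  by (auto simp: States_def dest: in_set_butlastD)

lemma arrf_nonneg: "x \<in> St \<Longrightarrow> (\<forall>y\<in>St. f y \<ge> 0) \<Longrightarrow> arrf f x \<ge> 0"
  unfolding arrf_def using butlast_St lam_pos by auto

lemma depf_nonneg: "x \<in> St \<Longrightarrow> (\<forall>y\<in>St. f y \<ge> 0) \<Longrightarrow> depf f x \<ge> 0"
  unfolding depf_def using ins_at_St svc_rate_nonneg
  by (intro sum_nonneg mult_nonneg_nonneg) auto

lemma arrf_mono: "x \<in> St \<Longrightarrow> (\<forall>y\<in>St. f y \<le> g y) \<Longrightarrow> arrf f x \<le> arrf g x"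
  unfolding arrf_def using butlast_St lam_pos CC_pos by (auto simp: divide_right_mono)

lemma depf_mono: "x \<in> St \<Longrightarrow> (\<forall>y\<in>St. f y \<le> g y) \<Longrightarrow> depf f x \<le> depf g x"
  unfolding depf_def using ins_at_St svc_rate_nonneg
  by (intro sum_mono mult_right_mono) auto

lemma propagate:
  assumes nn: "\<forall>y\<in>St. f y \<ge> 0" and b: "bal f" and z: "f [] = 0"
  shows "\<forall>x\<in>St. f x = 0"
proof
  fix x assume "x \<in> St"
  then show "f x = 0"
  proof (induction x)
    case Nil then show ?case using z by simp
  next
    case (Cons T x)
    have x: "x \<in> St" and T: "T \<in> Ty" using Cons.prems by (auto simp: States_def)
    have fx: "f x = 0" using Cons.IH[OF x] .
    have "arrf f x + depf f x = 0" using b x fx unfolding bal_def by auto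
    moreover have "arrf f x \<ge> 0" using arrf_nonneg[OF x nn] .
    ultimately have dz: "depf f x \<le> 0" by linarith
    have "f (ins_at 0 T x) * svc_rate mu (ins_at 0 T x) 0
          \<le> (\<Sum>T'\<in>Ty. f (ins_at 0 T' x) * svc_rate mu (ins_at 0 T' x) 0)"
    proof (rule member_le_sum[of T Ty "\<lambda>T'. f (ins_at 0 T' x) * svc_rate mu (ins_at 0 T' x) 0"])
      show "T \<in> Ty" by (rule T)
      show "finite Ty" by (rule finite_Types)
      fix T' assume "T' \<in> Ty - {T}"
      then have "T' \<in> Ty" by simp
      then have "ins_at 0 T' x \<in> St" by (rule ins_at_St[OF x])
      then show "0 \<le> f (ins_at 0 T' x) * svc_rate mu (ins_at 0 T' x) 0"
        using nn svc_rate_nonneg by (auto intro: mult_nonneg_nonneg)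
    qed
    also have "\<dots> \<le> depf f x"
      unfolding depf_def using ins_at_St[OF x] nn svc_rate_nonneg
      by (intro member_le_sum[of 0 "{..length x}" "\<lambda>j. \<Sum>T'\<in>Ty. f (ins_at j T' x) * svc_rate mu (ins_at j T' x) j"])
         (auto intro!: sum_nonneg mult_nonneg_nonneg)
    finally have le: "f (T # x) * svc_rate mu (T # x) 0 \<le> 0" using dz by simp
    have "svc_rate mu (T # x) 0 = mu * real d"
      using Types_card[OF T] by (simp add: svc_rate_def)
    then have "svc_rate mu (T # x) 0 > 0" using mu_pos d1 by simp
    then have "f (T # x) \<le> 0" using le by (simp add: mult_le_0_iff)
    moreover have "f (T # x) \<ge> 0" using nn Cons.prems by auto
    ultimately show ?case by simp
  qed
qed

lemma sum_Lv_Suc_butlast: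
  "(\<Sum>x\<in>Lv (Suc n). g (butlast x)) = real CC * (\<Sum>y\<in>Lv n. g y)"
proof -
  have "(\<Sum>x\<in>Lv (Suc n). g (butlast x)) = (\<Sum>(y, T)\<in>Lv n \<times> Ty. g y)"
  proof (rule sum.reindex_bij_witness[where i = "\<lambda>(y, T). y @ [T]" and j = "\<lambda>x. (butlast x, last x)"])
    fix a assume "a \<in> Lv (Suc n)"
    then have "a \<noteq> []" by (auto simp: Lv_def)
    then show "(case (butlast a, last a) of (y, T) \<Rightarrow> y @ [T]) = a" by simp
    show "(butlast a, last a) \<in> Lv n \<times> Ty" using \<open>a \<in> Lv (Suc n)\<close> \<open>a \<noteq> []\<close>
      by (auto simp: Lv_def dest: in_set_butlastD)
    show "(case (butlast a, last a) of (y, T) \<Rightarrow> g y) = g (butlast a)" by simp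
  next
    fix b assume "b \<in> Lv n \<times> Ty"
    then show "(butlast (case b of (y, T) \<Rightarrow> y @ [T]), last (case b of (y, T) \<Rightarrow> y @ [T])) = b"
      by auto
    show "(case b of (y, T) \<Rightarrow> y @ [T]) \<in> Lv (Suc n)" using \<open>b \<in> Lv n \<times> Ty\<close>
      by (auto simp: Lv_def)
  qed
  also have "\<dots> = (\<Sum>y\<in>Lv n. \<Sum>T\<in>Ty. g y)" by (rule sum.cartesian_product[symmetric])
  also have "\<dots> = real CC * (\<Sum>y\<in>Lv n. g y)" using card_Ty by (simp add: sum_distrib_left)
  finally show ?thesis .
qed

lemma sum_Lv_depf:
  "(\<Sum>x\<in>Lv n. depf f x) = (\<Sum>y\<in>Lv (Suc n). f y * Dr y)"
proof -
  have "(\<Sum>x\<in>Lv n. depf f x) = (\<Sum>x\<in>Lv n. \<Sum>j\<le>n. \<Sum>T\<in>Ty. f (ins_at j T x) * svc_rate mu (ins_at j T x) j)"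
    unfolding depf_def by (intro sum.cong) (auto simp: Lv_def)
  also have "\<dots> = (\<Sum>(x, j, T)\<in>Lv n \<times> ({..n} \<times> Ty). f (ins_at j T x) * svc_rate mu (ins_at j T x) j)"
    by (simp add: sum.cartesian_product)
  also have "\<dots> = (\<Sum>(y, j)\<in>Sigma (Lv (Suc n)) (\<lambda>_. {..<Suc n}). f y * svc_rate mu y j)"
  proof (rule sum.reindex_bij_witness[where i = "\<lambda>(y, j). (del_at j y, j, y ! j)"
          and j = "\<lambda>(x, j, T). (ins_at j T x, j)"])
    fix a assume a: "a \<in> Lv n \<times> ({..n} \<times> Ty)"
    then obtain x j T where aa: "a = (x, j, T)" "x \<in> Lv n" "j \<le> n" "T \<in> Ty" by auto
    then have jl: "j \<le> length x" by (simp add: Lv_def)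
    show "(case case a of (x, j, T) \<Rightarrow> (ins_at j T x, j) of (y, j) \<Rightarrow> (del_at j y, j, y ! j)) = a"
      using aa jl by simp
    show "(case a of (x, j, T) \<Rightarrow> (ins_at j T x, j)) \<in> Sigma (Lv (Suc n)) (\<lambda>_. {..<Suc n})"
      using aa jl by (auto simp: Lv_def)
    show "(case case a of (x, j, T) \<Rightarrow> (ins_at j T x, j) of (y, j) \<Rightarrow> f y * svc_rate mu y j) =
          (case a of (x, j, T) \<Rightarrow> f (ins_at j T x) * svc_rate mu (ins_at j T x) j)"
      using aa by simp
  next
    fix b assume b: "b \<in> Sigma (Lv (Suc n)) (\<lambda>_. {..<Suc n})"
    then obtain y j where bb: "b = (y, j)" "y \<in> Lv (Suc n)" "j < Suc n" by auto
    then have jl: "j < length y" by (simp add: Lv_def)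
    show "(case case b of (y, j) \<Rightarrow> (del_at j y, j, y ! j) of (x, j, T) \<Rightarrow> (ins_at j T x, j)) = b"
      using bb jl by (simp add: ins_del_at)
    have "set (del_at j y) \<subseteq> Ty" using bb set_del_at[of j y] by (auto simp: Lv_def)
    moreover have "y ! j \<in> Ty" using bb jl by (auto simp: Lv_def)
    ultimately show "(case b of (y, j) \<Rightarrow> (del_at j y, j, y ! j)) \<in> Lv n \<times> ({..n} \<times> Ty)"
      using bb jl by (auto simp: Lv_def)
  qed
  also have "\<dots> = (\<Sum>y\<in>Lv (Suc n). \<Sum>j<Suc n. f y * svc_rate mu y j)"
    by (subst sum.Sigma) (auto simp: finite_Lv)
  also have "\<dots> = (\<Sum>y\<in>Lv (Suc n). f y * Dr y)"
    unfolding Dr_def sum_distrib_left by (intro sum.cong) (auto simp: Lv_def)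
  finally show ?thesis .
qed

lemma sum_Lv_arrf:
  "(\<Sum>x\<in>Lv n. arrf f x) = (if n = 0 then 0 else lam * (\<Sum>y\<in>Lv (n - 1). f y))"
proof (cases n)
  case 0
  then show ?thesis by (simp add: Lv_def arrf_def)
next
  case (Suc m)
  have "(\<Sum>x\<in>Lv (Suc m). arrf f x) = (\<Sum>x\<in>Lv (Suc m). f (butlast x) * lam / real CC)"
    unfolding arrf_def by (intro sum.cong) (auto simp: Lv_def)
  also have "\<dots> = real CC * (\<Sum>y\<in>Lv m. f y * lam / real CC)"
    by (rule sum_Lv_Suc_butlast)
  also have "\<dots> = lam * (\<Sum>y\<in>Lv m. f y)"
    using CC_pos by (simp add: sum_distrib_left sum_divide_distrib[symmetric] field_simps)
  finally show ?thesis using Suc by simp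
qed

lemma Lv0: "Lv 0 = {[]}" by (auto simp: Lv_def)

lemma Lv_disj: "i \<noteq> j \<Longrightarrow> Lv i \<inter> Lv j = {}" by (auto simp: Lv_def)

lemma telescope:
  fixes e :: "nat set list \<Rightarrow> real"
  assumes e: "\<And>x. e x = f x * (lam + Dr x) - arrf f x - depf f x"
  shows "(\<Sum>n\<le>m. \<Sum>x\<in>Lv n. e x) = lam * (\<Sum>x\<in>Lv m. f x) - (\<Sum>y\<in>Lv (Suc m). f y * Dr y)"
proof (induction m)
  case 0
  have "(\<Sum>x\<in>Lv 0. e x) = f [] * (lam + Dr []) - arrf f [] - depf f []" by (simp add: Lv0 e)
  also have "\<dots> = lam * f [] - (\<Sum>y\<in>Lv (Suc 0). f y * Dr y)"
    using sum_Lv_depf[where n=0 and f=f] by (simp add: Lv0 Dr_def arrf_def)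
  finally show ?case by (simp add: Lv0)
next
  case (Suc m)
  have "(\<Sum>x\<in>Lv (Suc m). e x) = (\<Sum>x\<in>Lv (Suc m). f x * (lam + Dr x)) - (\<Sum>x\<in>Lv (Suc m). arrf f x)
          - (\<Sum>x\<in>Lv (Suc m). depf f x)"
    by (simp add: e sum_subtractf)
  also have "\<dots> = lam * (\<Sum>x\<in>Lv (Suc m). f x) + (\<Sum>x\<in>Lv (Suc m). f x * Dr x)
          - lam * (\<Sum>y\<in>Lv m. f y) - (\<Sum>y\<in>Lv (Suc (Suc m)). f y * Dr y)"
    by (simp add: sum_Lv_arrf sum_Lv_depf algebra_simps sum.distrib sum_distrib_left)
  finally show ?case using Suc by simp
qed

lemma sum_levels_le:
  fixes p :: "nat set list \<Rightarrow> real"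
  assumes p: "(p has_sum 1) St" "\<forall>x\<in>St. p x \<ge> 0"
  shows "(\<Sum>m<N. \<Sum>x\<in>Lv m. p x) \<le> 1"
proof -
  have "(\<Sum>m<N. \<Sum>x\<in>Lv m. p x) = sum p (\<Union>m<N. Lv m)"
    by (rule sum.UNION_disjoint[symmetric]) (simp_all add: finite_Lv Lv_disj)
  also have "\<dots> \<le> 1"
    using p by (intro finite_sum_le_has_sum[OF p(1)]) (auto simp: finite_Lv Lv_St)
  finally show ?thesis .
qed

lemma levels_tendsto0:
  fixes p :: "nat set list \<Rightarrow> real"
  assumes p: "(p has_sum 1) St" "\<forall>x\<in>St. p x \<ge> 0"
  shows "(\<lambda>m. \<Sum>x\<in>Lv m. p x) \<longlonglongrightarrow> 0"
proof -
  have nn: "0 \<le> (\<Sum>x\<in>Lv m. p x)" for m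
    using p(2) Lv_St by (intro sum_nonneg) auto
  have "summable (\<lambda>m. \<Sum>x\<in>Lv m. p x)"
    by (rule summableI_nonneg_bounded[where x = 1, OF nn sum_levels_le[OF p]])
  then show ?thesis by (rule summable_LIMSEQ_zero)
qed

lemma min_bal:
  assumes bp: "bal p" and bq: "bal q"
    and p: "(p has_sum 1) St" "\<forall>x\<in>St. p x \<ge> 0" and qn: "\<forall>x\<in>St. q x \<ge> 0"
  shows "bal (\<lambda>x. min (p x) (q x))"
proof -
  define f where "f = (\<lambda>x. min (p x) (q x))"
  define e where "e = (\<lambda>x. f x * (lam + Dr x) - arrf f x - depf f x)"
  have fn: "\<forall>x\<in>St. f x \<ge> 0" using p(2) qn by (simp add: f_def)
  have e_nn: "e x \<ge> 0" if x: "x \<in> St" for x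
  proof -
    have o: "lam + Dr x \<ge> 0" using lam_pos Dr_nonneg[of x] by simp
    have "arrf f x + depf f x \<le> arrf p x + depf p x"
      using arrf_mono[OF x] depf_mono[OF x] by (simp add: f_def add_mono)
    also have "\<dots> = p x * (lam + Dr x)" using bp x by (simp add: bal_def)
    finally have 1: "arrf f x + depf f x \<le> p x * (lam + Dr x)" .
    have "arrf f x + depf f x \<le> arrf q x + depf q x"
      using arrf_mono[OF x] depf_mono[OF x] by (simp add: f_def add_mono)
    also have "\<dots> = q x * (lam + Dr x)" using bq x by (simp add: bal_def)
    finally have 2: "arrf f x + depf f x \<le> q x * (lam + Dr x)" .
    have "f x * (lam + Dr x) = min (p x * (lam + Dr x)) (q x * (lam + Dr x))"
      unfolding f_def using o by (simp add: min_mult_distrib_right)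
    then show ?thesis unfolding e_def using 1 2 by simp
  qed
  have E0: "(\<Sum>x\<in>Lv n. e x) = 0" for n
  proof -
    have le: "(\<Sum>x\<in>Lv n. e x) \<le> lam * (\<Sum>x\<in>Lv m. p x)" if "m \<ge> n" for m
    proof -
      have "(\<Sum>x\<in>Lv n. e x) \<le> (\<Sum>n'\<le>m. \<Sum>x\<in>Lv n'. e x)"
        using that e_nn Lv_St
        by (intro member_le_sum[of n "{..m}" "\<lambda>n'. \<Sum>x\<in>Lv n'. e x"]) (auto intro!: sum_nonneg)
      also have "\<dots> = lam * (\<Sum>x\<in>Lv m. f x) - (\<Sum>y\<in>Lv (Suc m). f y * Dr y)"
        by (rule telescope) (simp add: e_def)
      also have "\<dots> \<le> lam * (\<Sum>x\<in>Lv m. f x)"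
        using fn Dr_nonneg Lv_St by (auto intro!: sum_nonneg mult_nonneg_nonneg)
      also have "\<dots> \<le> lam * (\<Sum>x\<in>Lv m. p x)"
        using lam_pos by (intro mult_left_mono sum_mono) (auto simp: f_def)
      finally show ?thesis .
    qed
    have "(\<lambda>m. lam * (\<Sum>x\<in>Lv m. p x)) \<longlonglongrightarrow> lam * 0"
      by (intro tendsto_mult tendsto_const levels_tendsto0[OF p])
    then have "(\<Sum>x\<in>Lv n. e x) \<le> 0"
      using le by (intro LIMSEQ_le_const[where a = "\<Sum>x\<in>Lv n. e x"]) auto
    moreover have "(\<Sum>x\<in>Lv n. e x) \<ge> 0" using e_nn Lv_St by (auto intro!: sum_nonneg)
    ultimately show ?thesis by simp
  qed
  have "e x = 0" if x: "x \<in> St" for x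
  proof -
    have xl: "x \<in> Lv (length x)" using x by (simp add: Lv_def States_def)
    have "\<forall>y\<in>Lv (length x). e y = 0"
      using E0[of "length x"] e_nn Lv_St by (subst sum_nonneg_eq_0_iff[symmetric]) (auto simp: finite_Lv)
    then show ?thesis using xl by auto
  qed
  then show ?thesis unfolding bal_def f_def[symmetric]
  proof (intro ballI)
    fix x assume "x \<in> St"
    then have "e x = 0" using \<open>\<And>x. x \<in> St \<Longrightarrow> e x = 0\<close> by blast
    then show "f x * (lam + Dr x) = arrf f x + depf f x" unfolding e_def by simp
  qed
qed

theorem uniqueness:
  assumes st: "stationary_dist K d lam mu p"
  shows "\<forall>x\<in>St. p x = p [] * w x"
proof -
  have bp: "bal p" using bal_stat[OF st] .
  have p: "(p has_sum 1) St" "\<forall>x\<in>St. p x \<ge> 0" using st by (auto simp: stationary_dist_def)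
  have e: "[] \<in> St" by (simp add: States_def)
  have p0: "p [] \<ge> 0" using p(2) e by auto
  define q where "q = (\<lambda>x. p [] * w x)"
  have bq: "bal q" unfolding q_def by (rule bal_scale[OF bal_w])
  have qn: "\<forall>x\<in>St. q x \<ge> 0"
  proof
    fix x assume "x \<in> St"
    then have "w x > 0" by (intro w_pos) (simp add: States_def)
    then show "q x \<ge> 0" unfolding q_def using p0 by simp
  qed
  define m where "m = (\<lambda>x. min (p x) (q x))"
  have bm: "bal m" unfolding m_def by (rule min_bal[OF bp bq p qn])
  have w0: "w [] = 1" by (simp add: w_def)
  have b1: "bal (\<lambda>x. p x - m x)" by (rule bal_diff[OF bp bm])
  have b2: "bal (\<lambda>x. q x - m x)" by (rule bal_diff[OF bq bm])
  have "\<forall>x\<in>St. p x - m x = 0"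
    by (rule propagate[OF _ b1]) (auto simp: m_def q_def w0)
  moreover have "\<forall>x\<in>St. q x - m x = 0"
    by (rule propagate[OF _ b2]) (auto simp: m_def q_def w0)
  ultimately show ?thesis by (auto simp: q_def)
qed

end


lemma has_sum_Sigma_c:
  fixes f :: "'a \<times> 'b \<Rightarrow> complex"
  assumes inner: "\<And>x. x \<in> A \<Longrightarrow> ((\<lambda>y. f (x, y)) has_sum g x) (B x)"
    and innern: "\<And>x. x \<in> A \<Longrightarrow> ((\<lambda>y. norm (f (x, y))) has_sum gn x) (B x)"
    and outer: "(g has_sum S) A" and outern: "gn summable_on A"
  shows "(f has_sum S) (Sigma A B)"
proof -
  have "(\<lambda>z. norm (f z)) summable_on Sigma A B"
    by (rule summable_on_SigmaI[where g = gn]) (use innern outern in auto)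
  then have "f summable_on Sigma A B" by (rule abs_summable_summable)
  then show ?thesis using has_sum_SigmaI[where f=f and g=g and A=A and B=B and S=S] inner outer by blast
qed

lemma has_sum_prod_c:
  fixes f :: "'a \<Rightarrow> complex" and g :: "'b \<Rightarrow> complex"
  assumes f: "(f has_sum Fs) X" and g: "(g has_sum Gs) Y"
  shows "((\<lambda>(x, y). f x * g y) has_sum (Fs * Gs)) (X \<times> Y)"
proof -
  have fn: "(\<lambda>x. norm (f x)) summable_on X"
    using f summable_on_iff_abs_summable_on_complex by (auto simp: summable_on_def)
  have gn: "(\<lambda>y. norm (g y)) summable_on Y"
    using g summable_on_iff_abs_summable_on_complex by (auto simp: summable_on_def)
  define Gn where "Gn = infsum (\<lambda>y. norm (g y)) Y"
  have gnh: "((\<lambda>y. norm (g y)) has_sum Gn) Y" using gn unfolding Gn_def by simp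
  have "((\<lambda>z. case z of (x, y) \<Rightarrow> f x * g y) has_sum (Fs * Gs)) (Sigma X (\<lambda>_. Y))"
  proof (rule has_sum_Sigma_c[where g = "\<lambda>x. f x * Gs" and gn = "\<lambda>x. norm (f x) * Gn"])
    fix x assume "x \<in> X"
    show "((\<lambda>y. case (x, y) of (x, y) \<Rightarrow> f x * g y) has_sum f x * Gs) Y"
      using has_sum_cmult_right[OF g, of "f x"] by simp
    show "((\<lambda>y. norm (case (x, y) of (x, y) \<Rightarrow> f x * g y)) has_sum norm (f x) * Gn) Y"
      using has_sum_cmult_right[OF gnh, of "norm (f x)"] by (simp add: norm_mult)
  next
    show "((\<lambda>x. f x * Gs) has_sum Fs * Gs) X" by (rule has_sum_cmult_left[OF f])
    show "(\<lambda>x. norm (f x) * Gn) summable_on X" by (rule summable_on_cmult_left[OF fn])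
  qed
  then show ?thesis by simp
qed

lemma sum_lists_level:
  fixes g :: "'a \<Rightarrow> 'b::comm_semiring_1"
  assumes "finite A"
  shows "(\<Sum>b\<in>{b. set b \<subseteq> A \<and> length b = n}. prod_list (map g b)) = (sum g A) ^ n"
proof (induction n)
  case 0
  have "{b. set b \<subseteq> A \<and> length b = 0} = {[]}" by auto
  then show ?case by simp
next
  case (Suc n)
  have "(\<Sum>b\<in>{b. set b \<subseteq> A \<and> length b = Suc n}. prod_list (map g b))
      = (\<Sum>b\<in>(\<lambda>(xs, a). a # xs) ` ({b. set b \<subseteq> A \<and> length b = n} \<times> A). prod_list (map g b))"
    by (simp only: lists_length_Suc_eq)
  also have "\<dots> = (\<Sum>(xs, a)\<in>{b. set b \<subseteq> A \<and> length b = n} \<times> A. g a * prod_list (map g xs))"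
    by (subst sum.reindex[OF inj_split_Cons]) (simp add: case_prod_unfold)
  also have "\<dots> = (\<Sum>xs\<in>{b. set b \<subseteq> A \<and> length b = n}. \<Sum>a\<in>A. g a * prod_list (map g xs))"
    by (rule sum.cartesian_product[symmetric])
  also have "\<dots> = (\<Sum>xs\<in>{b. set b \<subseteq> A \<and> length b = n}. prod_list (map g xs)) * sum g A"
    by (simp add: sum_distrib_right sum_distrib_left mult.commute)
  also have "\<dots> = sum g A ^ Suc n" using Suc by (simp add: mult.commute)
  finally show ?case .
qed

lemma norm_prod_list_map: "norm (prod_list (map g b)) = prod_list (map (\<lambda>a. norm (g a)) b)"
  for g :: "'a \<Rightarrow> complex"
  by (induction b) (simp_all add: norm_mult)

lemma geometric_has_sum_c:
  fixes q :: complex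
  assumes "norm q < 1"
  shows "((\<lambda>n. q ^ n) has_sum (1 / (1 - q))) UNIV"
proof (rule norm_summable_imp_has_sum)
  show "summable (\<lambda>n. norm (q ^ n))"
    using summable_geometric[of "norm q"] assms by (simp add: norm_power)
  show "(\<lambda>n. q ^ n) sums (1 / (1 - q))"
    using geometric_sums[OF assms] by simp
qed

lemma lists_geom:
  fixes g :: "'a \<Rightarrow> complex"
  assumes A: "finite A" and lt: "(\<Sum>a\<in>A. norm (g a)) < 1"
  shows "((\<lambda>b. prod_list (map g b)) has_sum (1 / (1 - sum g A))) {b. set b \<subseteq> A}"
proof -
  define L where "L = (\<lambda>n. {b. set b \<subseteq> A \<and> length b = n})"
  have nq: "norm (sum g A) < 1"
    using norm_sum[of g A] lt by linarith
  have Sig: "((\<lambda>z. prod_list (map g (snd z))) has_sum (1 / (1 - sum g A))) (Sigma UNIV L)"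
  proof (rule has_sum_Sigma_c[where g = "\<lambda>n. (sum g A) ^ n"
        and gn = "\<lambda>n. (\<Sum>a\<in>A. norm (g a)) ^ n"])
    fix n :: nat
    have fL: "finite (L n)" unfolding L_def using finite_lists_length_eq[OF A] .
    show "((\<lambda>b. prod_list (map g (snd (n, b)))) has_sum sum g A ^ n) (L n)"
      using sum_lists_level[OF A, of g n] fL unfolding L_def by (intro has_sum_finiteI) simp_all
    show "((\<lambda>b. norm (prod_list (map g (snd (n, b))))) has_sum (\<Sum>a\<in>A. norm (g a)) ^ n) (L n)"
      using sum_lists_level[OF A, of "\<lambda>a. norm (g a)" n] fL unfolding L_def
      by (intro has_sum_finiteI) (simp_all add: norm_prod_list_map)
  next
    show "((\<lambda>n. sum g A ^ n) has_sum 1 / (1 - sum g A)) UNIV"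
      by (rule geometric_has_sum_c[OF nq])
    have "summable (\<lambda>n. (\<Sum>a\<in>A. norm (g a)) ^ n)"
      by (rule summable_geometric) (use lt in \<open>simp add: abs_of_nonneg sum_nonneg\<close>)
    then show "(\<lambda>n. (\<Sum>a\<in>A. norm (g a)) ^ n) summable_on UNIV"
      by (subst summable_on_UNIV_nonneg_real_iff) (auto intro!: zero_le_power sum_nonneg)
  qed
  have inj: "inj_on snd (Sigma UNIV L)" unfolding L_def by (auto intro: inj_onI)
  have im: "snd ` Sigma UNIV L = {b. set b \<subseteq> A}" unfolding L_def by force
  show ?thesis
    using Sig has_sum_reindex[OF inj, of "\<lambda>b. prod_list (map g b)"] im by (simp add: comp_def)
qed

definition Rset :: "nat set set \<Rightarrow> nat set set \<Rightarrow> nat set list set" where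
  "Rset TT A = insert [] ((\<lambda>(t, r). t # r) ` ((TT - A) \<times> {b. set b \<subseteq> TT}))"

lemma Rset_empty: "Rset TT {} = {b. set b \<subseteq> TT}"
  unfolding Rset_def by (auto simp: image_iff) (metis list.exhaust set_subset_Cons subset_trans insert_subset list.simps(15))

lemma first_step:
  fixes h :: "nat set \<Rightarrow> complex"
  assumes TT: "finite TT"
    and S: "\<And>t. t \<in> TT - A \<Longrightarrow> (wt h (V \<union> t) has_sum S t) {b. set b \<subseteq> TT}"
  shows "(wt h V has_sum (1 + (\<Sum>t\<in>TT - A. h t / of_nat (card (V \<union> t)) * S t))) (Rset TT A)"
proof -
  define St where "St = {b. set b \<subseteq> TT}"
  have "((\<lambda>z. case z of (t, r) \<Rightarrow> h t / of_nat (card (V \<union> t)) * wt h (V \<union> t) r)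
          has_sum (\<Sum>t\<in>TT - A. h t / of_nat (card (V \<union> t)) * S t)) (Sigma (TT - A) (\<lambda>_. St))"
  proof (rule has_sum_Sigma_c[where g = "\<lambda>t. h t / of_nat (card (V \<union> t)) * S t"
        and gn = "\<lambda>t. infsum (\<lambda>r. norm (h t / of_nat (card (V \<union> t)) * wt h (V \<union> t) r)) St"])
    fix t assume t: "t \<in> TT - A"
    show "((\<lambda>r. case (t, r) of (t, r) \<Rightarrow> h t / of_nat (card (V \<union> t)) * wt h (V \<union> t) r)
            has_sum h t / of_nat (card (V \<union> t)) * S t) St"
      using has_sum_cmult_right[OF S[OF t], of "h t / of_nat (card (V \<union> t))"] unfolding St_def by simp
    have "(\<lambda>r. h t / of_nat (card (V \<union> t)) * wt h (V \<union> t) r) summable_on St"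
      using has_sum_cmult_right[OF S[OF t], of "h t / of_nat (card (V \<union> t))"] unfolding St_def summable_on_def by blast
    then have "(\<lambda>r. norm (h t / of_nat (card (V \<union> t)) * wt h (V \<union> t) r)) summable_on St"
      by (rule summable_on_iff_abs_summable_on_complex[THEN iffD1])
    then show "((\<lambda>r. norm (case (t, r) of (t, r) \<Rightarrow> h t / of_nat (card (V \<union> t)) * wt h (V \<union> t) r))
            has_sum infsum (\<lambda>r. norm (h t / of_nat (card (V \<union> t)) * wt h (V \<union> t) r)) St) St"
      by simp
  next
    show "((\<lambda>t. h t / of_nat (card (V \<union> t)) * S t) has_sum (\<Sum>t\<in>TT - A. h t / of_nat (card (V \<union> t)) * S t)) (TT - A)"
      using TT by (intro has_sum_finiteI) auto
    show "(\<lambda>t. infsum (\<lambda>r. norm (h t / of_nat (card (V \<union> t)) * wt h (V \<union> t) r)) St) summable_on (TT - A)"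
      using TT by (intro summable_on_finite) auto
  qed
  then have "((wt h V \<circ> (\<lambda>(t, r). t # r)) has_sum (\<Sum>t\<in>TT - A. h t / of_nat (card (V \<union> t)) * S t))
               ((TT - A) \<times> St)"
    by (simp add: comp_def case_prod_unfold)
  moreover have inj: "inj_on (\<lambda>(t, r). t # r) ((TT - A) \<times> St)" by (auto intro!: inj_onI)
  ultimately have "(wt h V has_sum (\<Sum>t\<in>TT - A. h t / of_nat (card (V \<union> t)) * S t))
               ((\<lambda>(t, r). t # r) ` ((TT - A) \<times> St))"
    by (subst has_sum_reindex[OF inj])
  then have "(wt h V has_sum (wt h V [] + (\<Sum>t\<in>TT - A. h t / of_nat (card (V \<union> t)) * S t)))
               (insert [] ((\<lambda>(t, r). t # r) ` ((TT - A) \<times> St)))"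
    by (intro has_sum_insert) auto
  then show ?thesis unfolding Rset_def St_def by simp
qed


lemma block_decomp:
  fixes h :: "nat set \<Rightarrow> complex"
  assumes TT: "finite TT" and AT: "A \<subseteq> TT" and AV: "\<forall>a\<in>A. a \<subseteq> V"
    and lt: "(\<Sum>a\<in>A. norm (h a / of_nat (card V))) < 1"
    and R: "(wt h V has_sum X) (Rset TT A)"
  shows "(wt h V has_sum (1 / (1 - (\<Sum>a\<in>A. h a / of_nat (card V))) * X)) {b. set b \<subseteq> TT}"
proof -
  define P where "P = (\<lambda>t. t \<in> A)"
  have fA: "finite A" using TT AT by (rule rev_finite_subset)
  have L: "((\<lambda>a. prod_list (map (\<lambda>t. h t / of_nat (card V)) a)) has_sum
            (1 / (1 - (\<Sum>a\<in>A. h a / of_nat (card V))))) {b. set b \<subseteq> A}"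
    by (rule lists_geom[OF fA lt])
  have L': "(wt h V has_sum (1 / (1 - (\<Sum>a\<in>A. h a / of_nat (card V))))) {b. set b \<subseteq> A}"
  proof (rule has_sum_cong[THEN iffD1, OF _ L])
    fix a assume "a \<in> {b. set b \<subseteq> A}"
    then have "\<forall>t\<in>set a. t \<subseteq> V" using AV by auto
    then show "prod_list (map (\<lambda>t. h t / of_nat (card V)) a) = wt h V a" by (simp add: wt_cover)
  qed
  have prod: "((\<lambda>(a, r). wt h V a * wt h V r) has_sum
        (1 / (1 - (\<Sum>a\<in>A. h a / of_nat (card V))) * X)) ({b. set b \<subseteq> A} \<times> Rset TT A)"
    by (rule has_sum_prod_c[OF L' R])
  have key: "(wt h V has_sum (1 / (1 - (\<Sum>a\<in>A. h a / of_nat (card V))) * X)) {b. set b \<subseteq> TT}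
        = ((\<lambda>(a, r). wt h V a * wt h V r) has_sum
        (1 / (1 - (\<Sum>a\<in>A. h a / of_nat (card V))) * X)) ({b. set b \<subseteq> A} \<times> Rset TT A)"
  proof (rule has_sum_reindex_bij_witness[where j = "\<lambda>y. (takeWhile P y, dropWhile P y)"
        and i = "\<lambda>(a, r). a @ r"])
    fix y assume y: "y \<in> {b. set b \<subseteq> TT}"
    show "(case (takeWhile P y, dropWhile P y) of (a, r) \<Rightarrow> a @ r) = y" by simp
    have t1: "set (takeWhile P y) \<subseteq> A" by (auto simp: P_def dest: set_takeWhileD)
    have t2: "dropWhile P y \<in> Rset TT A"
    proof (cases "dropWhile P y")
      case Nil then show ?thesis by (simp add: Rset_def)
    next
      case (Cons t r)
      have "\<not> P t" using hd_dropWhile[of P y] Cons by auto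
      moreover have "set (dropWhile P y) \<subseteq> TT" using y by (auto dest: set_dropWhileD)
      ultimately show ?thesis using Cons by (auto simp: Rset_def P_def image_iff)
    qed
    show "(takeWhile P y, dropWhile P y) \<in> {b. set b \<subseteq> A} \<times> Rset TT A" using t1 t2 by simp
    have "\<forall>t\<in>set (takeWhile P y). t \<subseteq> V" using t1 AV by auto
    then have "V \<union> UU (takeWhile P y) = V" by (auto simp: UU_def)
    then show "(case (takeWhile P y, dropWhile P y) of (a, r) \<Rightarrow> wt h V a * wt h V r) = wt h V y"
      using wt_append[of h V "takeWhile P y" "dropWhile P y"] by simp
  next
    fix b assume b: "b \<in> {b. set b \<subseteq> A} \<times> Rset TT A"
    then obtain a r where ar: "b = (a, r)" "set a \<subseteq> A" "r \<in> Rset TT A" by auto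
    have aP: "\<And>x. x \<in> set a \<Longrightarrow> P x" using ar by (auto simp: P_def)
    have r0: "takeWhile P r = []" "dropWhile P r = r"
      using ar(3) by (auto simp: Rset_def P_def)
    show "(takeWhile P (case b of (a, r) \<Rightarrow> a @ r), dropWhile P (case b of (a, r) \<Rightarrow> a @ r)) = b"
      using ar aP r0 by (simp add: takeWhile_append2 dropWhile_append2)
    have "set r \<subseteq> TT" using ar(3) by (auto simp: Rset_def)
    then show "(case b of (a, r) \<Rightarrow> a @ r) \<in> {b. set b \<subseteq> TT}" using ar AT by auto
  qed simp
  show ?thesis using key prod by simp
qed

definition DT :: "'a set \<Rightarrow> 'a list set" where
  "DT B = {ts. distinct ts \<and> set ts \<subseteq> B}"

lemma finite_DT: "finite B \<Longrightarrow> finite (DT B)"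
proof -
  assume B: "finite B"
  have "DT B \<subseteq> {xs. set xs \<subseteq> B \<and> length xs \<le> card B}"
    unfolding DT_def using B by (auto simp: distinct_card[symmetric] intro: card_mono)
  then show ?thesis using finite_lists_length_le[OF B] by (rule finite_subset)
qed

lemma DT_eq: "DT B = insert [] (\<Union>t\<in>B. Cons t ` DT (B - {t}))"
  unfolding DT_def
proof (intro set_eqI iffI)
  fix ts assume "ts \<in> {ts. distinct ts \<and> set ts \<subseteq> B}"
  then show "ts \<in> insert [] (\<Union>t\<in>B. Cons t ` {ts. distinct ts \<and> set ts \<subseteq> B - {t}})"
    by (cases ts) auto
next
  fix ts assume "ts \<in> insert [] (\<Union>t\<in>B. Cons t ` {ts. distinct ts \<and> set ts \<subseteq> B - {t}})"
  then show "ts \<in> {ts. distinct ts \<and> set ts \<subseteq> B}" by auto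
qed

lemma DT_rec:
  assumes B: "finite B"
  shows "sum f (DT B) = f [] + (\<Sum>t\<in>B. \<Sum>ts\<in>DT (B - {t}). f (t # ts))"
proof -
  have fin: "finite (\<Union>t\<in>B. Cons t ` DT (B - {t}))" using B by (auto intro: finite_DT)
  have "sum f (DT B) = f [] + sum f (\<Union>t\<in>B. Cons t ` DT (B - {t}))"
    by (subst DT_eq) (rule sum.insert[OF fin], auto)
  also have "sum f (\<Union>t\<in>B. Cons t ` DT (B - {t})) = (\<Sum>t\<in>B. sum f (Cons t ` DT (B - {t})))"
    by (rule sum.UNION_disjoint) (use B in \<open>auto intro: finite_DT\<close>)
  also have "\<dots> = (\<Sum>t\<in>B. \<Sum>ts\<in>DT (B - {t}). f (t # ts))"
  proof (rule sum.cong[OF refl])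
    fix t assume "t \<in> B"
    show "sum f (Cons t ` DT (B - {t})) = (\<Sum>ts\<in>DT (B - {t}). f (t # ts))"
      by (rule sum.reindex_cong[where l = "Cons t"]) (auto simp: inj_on_def)
  qed
  finally show ?thesis .
qed

fun tw :: "(nat set \<Rightarrow> complex) \<Rightarrow> nat set set \<Rightarrow> nat set list \<Rightarrow> complex" where
  "tw h A [] = 1"
| "tw h A (t # ts) = h t / (of_nat (card (\<Union>(insert t A))) - (\<Sum>a\<in>insert t A. h a)) * tw h (insert t A) ts"

definition Phi :: "(nat set \<Rightarrow> complex) \<Rightarrow> nat set set \<Rightarrow> nat set set \<Rightarrow> complex" where
  "Phi h TT A = (\<Sum>ts\<in>DT (TT - A). tw h A ts)"

lemma Phi_rec:
  assumes TT: "finite TT"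
  shows "Phi h TT A = 1 + (\<Sum>t\<in>TT - A. h t / (of_nat (card (\<Union>(insert t A))) - (\<Sum>a\<in>insert t A. h a))
                              * Phi h TT (insert t A))"
proof -
  have "Phi h TT A = tw h A [] + (\<Sum>t\<in>TT - A. \<Sum>ts\<in>DT (TT - A - {t}). tw h A (t # ts))"
    unfolding Phi_def by (rule DT_rec) (use TT in auto)
  also have "\<dots> = 1 + (\<Sum>t\<in>TT - A. h t / (of_nat (card (\<Union>(insert t A))) - (\<Sum>a\<in>insert t A. h a))
                              * Phi h TT (insert t A))"
  proof -
    have "(\<Sum>ts\<in>DT (TT - A - {t}). tw h A (t # ts)) =
        h t / (of_nat (card (\<Union>(insert t A))) - (\<Sum>a\<in>insert t A. h a)) * Phi h TT (insert t A)" for t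
    proof -
      have e: "TT - A - {t} = TT - insert t A" by auto
      show ?thesis unfolding Phi_def e tw.simps sum_distrib_left ..
    qed
    then show ?thesis by simp
  qed
  finally show ?thesis .
qed

lemma alg_div:
  fixes x c P H :: complex
  assumes "c \<noteq> 0"
  shows "x / c * (P / (1 - H / c)) = x / (c - H) * P"
proof (cases "c - H = 0")
  case True
  then have "H = c" by simp
  then show ?thesis using assms by simp
next
  case False
  then have "1 - H / c \<noteq> 0" using assms by (simp add: field_simps)
  then show ?thesis using assms False by (simp add: field_simps)
qed

lemma CF_gen:
  fixes h :: "nat set \<Rightarrow> complex"
  assumes TT: "finite TT" and elem: "\<forall>t\<in>TT. finite t \<and> t \<noteq> {}"
    and cond: "\<forall>A\<subseteq>TT. A \<noteq> {} \<longrightarrow> (\<Sum>a\<in>A. norm (h a)) < real (card (\<Union>A))"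
  shows "A \<subseteq> TT \<Longrightarrow> (wt h (\<Union>A) has_sum
           (Phi h TT A / (1 - (\<Sum>a\<in>A. h a) / of_nat (card (\<Union>A))))) {b. set b \<subseteq> TT}"
proof (induction "card (TT - A)" arbitrary: A rule: less_induct)
  case less
  define V where "V = \<Union>A"
  have fV: "finite V" unfolding V_def using less.prems elem TT by (auto intro: finite_subset)
  have S: "(wt h (V \<union> t) has_sum (Phi h TT (insert t A) /
              (1 - (\<Sum>a\<in>insert t A. h a) / of_nat (card (V \<union> t))))) {b. set b \<subseteq> TT}"
    if t: "t \<in> TT - A" for t
  proof -
    have "card (TT - insert t A) < card (TT - A)"
      using t TT by (intro psubset_card_mono) auto
    moreover have "insert t A \<subseteq> TT" using t less.prems by auto
    moreover have "\<Union>(insert t A) = V \<union> t" unfolding V_def by auto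
    ultimately show ?thesis using less.hyps[of "insert t A"] by simp
  qed
  have fs: "(wt h V has_sum (1 + (\<Sum>t\<in>TT - A. h t / of_nat (card (V \<union> t)) *
              (Phi h TT (insert t A) / (1 - (\<Sum>a\<in>insert t A. h a) / of_nat (card (V \<union> t))))))) (Rset TT A)"
    by (rule first_step[OF TT S])
  have eq: "1 + (\<Sum>t\<in>TT - A. h t / of_nat (card (V \<union> t)) *
              (Phi h TT (insert t A) / (1 - (\<Sum>a\<in>insert t A. h a) / of_nat (card (V \<union> t)))))
          = Phi h TT A"
  proof -
    have "(\<Sum>t\<in>TT - A. h t / of_nat (card (V \<union> t)) *
              (Phi h TT (insert t A) / (1 - (\<Sum>a\<in>insert t A. h a) / of_nat (card (V \<union> t)))))
        = (\<Sum>t\<in>TT - A. h t / (of_nat (card (\<Union>(insert t A))) - (\<Sum>a\<in>insert t A. h a))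
                              * Phi h TT (insert t A))"
    proof (rule sum.cong[OF refl])
      fix t assume t: "t \<in> TT - A"
      have "card (V \<union> t) > 0" using t elem fV by (simp add: card_gt_0_iff)
      then have "(of_nat (card (V \<union> t)) :: complex) \<noteq> 0" by simp
      moreover have "\<Union>(insert t A) = V \<union> t" unfolding V_def by auto
      ultimately show "h t / of_nat (card (V \<union> t)) *
              (Phi h TT (insert t A) / (1 - (\<Sum>a\<in>insert t A. h a) / of_nat (card (V \<union> t))))
          = h t / (of_nat (card (\<Union>(insert t A))) - (\<Sum>a\<in>insert t A. h a)) * Phi h TT (insert t A)"
        using alg_div by simp
    qed
    then show ?thesis using Phi_rec[OF TT, of h A] by simp
  qed
  have AV: "\<forall>a\<in>A. a \<subseteq> V" unfolding V_def by auto
  have lt: "(\<Sum>a\<in>A. norm (h a / of_nat (card V))) < 1"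
  proof (cases "A = {}")
    case True then show ?thesis by simp
  next
    case False
    then obtain a where a: "a \<in> A" by auto
    then have "a \<subseteq> V" "a \<noteq> {}" using AV elem less.prems by auto
    then have cV: "card V > 0" using fV by (auto simp: card_gt_0_iff)
    have "(\<Sum>a\<in>A. norm (h a / of_nat (card V))) = (\<Sum>a\<in>A. norm (h a)) / real (card V)"
      by (simp add: norm_divide sum_divide_distrib)
    also have "\<dots> < 1" using cond less.prems False cV unfolding V_def by (simp add: field_simps)
    finally show ?thesis .
  qed
  have hs: "(wt h V has_sum (1 / (1 - (\<Sum>a\<in>A. h a / of_nat (card V))) * Phi h TT A)) {b. set b \<subseteq> TT}"
    by (rule block_decomp[OF TT less.prems AV lt]) (use fs eq in simp)
  have eqn: "1 / (1 - (\<Sum>a\<in>A. h a / of_nat (card V))) * Phi h TT A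
      = Phi h TT A / (1 - (\<Sum>a\<in>A. h a) / of_nat (card V))"
  proof -
    have e: "(\<Sum>a\<in>A. h a / of_nat (card V)) = (\<Sum>a\<in>A. h a) / of_nat (card V)"
      by (rule sum_divide_distrib[symmetric])
    show ?thesis unfolding e by simp
  qed
  from hs have "(wt h V has_sum (Phi h TT A / (1 - (\<Sum>a\<in>A. h a) / of_nat (card V)))) {b. set b \<subseteq> TT}"
    by (simp only: eqn)
  then show ?case unfolding V_def .
qed

lemma CF:
  fixes h :: "nat set \<Rightarrow> complex"
  assumes TT: "finite TT" and elem: "\<forall>t\<in>TT. finite t \<and> t \<noteq> {}"
    and cond: "\<forall>A\<subseteq>TT. A \<noteq> {} \<longrightarrow> (\<Sum>a\<in>A. norm (h a)) < real (card (\<Union>A))"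
  shows "(wt h {} has_sum Phi h TT {}) {b. set b \<subseteq> TT}"
  using CF_gen[OF TT elem cond, of "{}"] by simp


lemma prod_list_const_map: "prod_list (map (\<lambda>_. c) b) = c ^ length b"
  by (induction b) auto

lemma wt_const_mult: "wt (\<lambda>_. c * z) V b = wt (\<lambda>_. c) V b * z ^ length b"
  by (induction b arbitrary: V) (auto simp: algebra_simps)

lemma tw_prod:
  "tw h A ts = (\<Prod>j=1..length ts. h (ts ! (j - 1)) /
      (of_nat (card (\<Union>(A \<union> set (take j ts)))) - (\<Sum>a\<in>A \<union> set (take j ts). h a)))"
proof (induction ts arbitrary: A)
  case Nil then show ?case by simp
next
  case (Cons t ts)
  have "(\<Prod>j=1..length (t # ts). h ((t # ts) ! (j - 1)) /
      (of_nat (card (\<Union>(A \<union> set (take j (t # ts))))) - (\<Sum>a\<in>A \<union> set (take j (t # ts)). h a)))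
    = h t / (of_nat (card (\<Union>(insert t A))) - (\<Sum>a\<in>insert t A. h a)) *
      (\<Prod>j=Suc 1..Suc (length ts). h ((t # ts) ! (j - 1)) /
      (of_nat (card (\<Union>(A \<union> set (take j (t # ts))))) - (\<Sum>a\<in>A \<union> set (take j (t # ts)). h a)))"
    by (subst prod.atLeast_Suc_atMost) simp_all
  also have "(\<Prod>j=Suc 1..Suc (length ts). h ((t # ts) ! (j - 1)) /
      (of_nat (card (\<Union>(A \<union> set (take j (t # ts))))) - (\<Sum>a\<in>A \<union> set (take j (t # ts)). h a)))
    = (\<Prod>j=1..length ts. h (ts ! (j - 1)) /
      (of_nat (card (\<Union>(insert t A \<union> set (take j ts)))) - (\<Sum>a\<in>insert t A \<union> set (take j ts). h a)))"
  proof (subst prod.atLeast_Suc_atMost_Suc_shift, rule prod.cong[OF refl])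
    fix j assume j: "j \<in> {1..length ts}"
    then have j1: "j \<ge> 1" by simp
    have e: "A \<union> set (take (Suc j) (t # ts)) = insert t A \<union> set (take j ts)" by auto
    have n: "(t # ts) ! (Suc j - 1) = ts ! (j - 1)" using j1 by (cases j) auto
    show "((\<lambda>j. h ((t # ts) ! (j - 1)) /
      (of_nat (card (\<Union>(A \<union> set (take j (t # ts))))) - (\<Sum>a\<in>A \<union> set (take j (t # ts)). h a))) \<circ> Suc) j
      = h (ts ! (j - 1)) /
      (of_nat (card (\<Union>(insert t A \<union> set (take j ts)))) - (\<Sum>a\<in>insert t A \<union> set (take j ts). h a))"
      by (simp only: comp_def e n)
  qed
  finally show ?case using Cons.IH[of "insert t A"] by simp
qed

lemma DT_Tuples: "DT (Types K d) = (\<Union>i\<in>{0..K choose d}. Tuples K d i)"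
proof (intro set_eqI iffI)
  fix ts assume ts: "ts \<in> DT (Types K d)"
  then have "length ts = card (set ts)" by (simp add: DT_def distinct_card)
  also have "\<dots> \<le> card (Types K d)" using ts by (intro card_mono finite_Types) (auto simp: DT_def)
  finally have "length ts \<le> K choose d" by (simp add: card_Types)
  then show "ts \<in> (\<Union>i\<in>{0..K choose d}. Tuples K d i)" using ts by (auto simp: DT_def Tuples_def)
next
  fix ts assume "ts \<in> (\<Union>i\<in>{0..K choose d}. Tuples K d i)"
  then show "ts \<in> DT (Types K d)" by (auto simp: DT_def Tuples_def)
qed

lemma finite_Tuples: "finite (Tuples K d i)"
proof -
  have "Tuples K d i \<subseteq> DT (Types K d)" by (auto simp: DT_def Tuples_def)
  then show ?thesis using finite_DT[OF finite_Types] by (rule finite_subset)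
qed

lemma sum_DT_Tuples:
  "(\<Sum>ts\<in>DT (Types K d). f ts) = (\<Sum>i=0..K choose d. \<Sum>ts\<in>Tuples K d i. f ts)"
  unfolding DT_Tuples
  apply (rule sum.UNION_disjoint)
    apply simp
   apply (simp add: finite_Tuples)
  apply (auto simp: Tuples_def)
  done

context coc
begin

lemma p0_pos_w_sum:
  assumes st: "stationary_dist K d lam mu p"
  shows "p [] > 0" "(w has_sum (1 / p [])) St"
proof -
  have u: "\<forall>x\<in>St. p x = p [] * w x" by (rule uniqueness[OF st])
  have ps: "(p has_sum 1) St" using st by (simp add: stationary_dist_def)
  have e: "[] \<in> St" by (simp add: States_def)
  have p0: "p [] \<ge> 0" using st e by (auto simp: stationary_dist_def)
  have pw: "((\<lambda>x. p [] * w x) has_sum 1) St"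
    using ps u by (subst has_sum_cong[where g = p]) auto
  show "p [] > 0"
  proof (rule ccontr)
    assume "\<not> p [] > 0"
    then have "p [] = 0" using p0 by simp
    then show False using pw has_sum_unique[OF pw, of 0] by simp
  qed
  then show "(w has_sum (1 / p [])) St"
    using has_sum_cmult_right[OF pw, of "1 / p []"] by simp
qed

lemma w_append_cover:
  assumes "set a0 \<subseteq> Ty" "set b \<subseteq> set a0"
  shows "w (a0 @ b) = w a0 * (cc / real (card (UU a0))) ^ length b"
proof -
  have "\<forall>t\<in>set b. t \<subseteq> {} \<union> UU a0" using assms(2) by (auto simp: UU_def)
  then show ?thesis unfolding w_def wt_append
    by (simp add: wt_cover prod_list_const_map)
qed

theorem stability_cond:
  assumes st: "stationary_dist K d lam mu p"
    and A: "A \<subseteq> Ty" "A \<noteq> {}"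
  shows "real (card A) * cc < real (card (\<Union>A))"
proof (rule ccontr)
  assume "\<not> real (card A) * cc < real (card (\<Union>A))"
  then have ge: "real (card A) * cc \<ge> real (card (\<Union>A))" by simp
  have fA: "finite A" by (rule finite_subset[OF A(1) finite_Types])
  obtain a0 where a0: "set a0 = A" "distinct a0" using finite_distinct_list[OF fA] by blast
  have a0T: "set a0 \<subseteq> Ty" using a0 A by simp
  have UA: "UU a0 = \<Union>A" using a0 by (simp add: UU_def)
  have cU: "card (\<Union>A) > 0"
  proof -
    obtain t where "t \<in> A" using A by auto
    then have "t \<subseteq> \<Union>A" "t \<noteq> {}" using Ty_ne A by auto
    moreover have "finite (\<Union>A)" using finite_UU[OF a0T] UA by simp
    ultimately show ?thesis by (auto simp: card_gt_0_iff)
  qed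
  define q where "q = real (card A) * (cc / real (card (\<Union>A)))"
  have q1: "q \<ge> 1" unfolding q_def using ge cU by (simp add: field_simps)
  have w0: "w a0 > 0" using w_pos[OF a0T] .
  have ws: "(w has_sum (1 / p [])) St" using p0_pos_w_sum(2)[OF st] .
  have bound: "w a0 * real N \<le> 1 / p []" for N
  proof -
    define B where "B = {b. set b \<subseteq> A \<and> length b < N}"
    have fB: "finite B" unfolding B_def using finite_lists_length_le[OF fA, of N]
      by (rule finite_subset[rotated]) auto
    have inj: "inj_on (\<lambda>b. a0 @ b) B" by (auto intro: inj_onI)
    have "(\<Sum>x\<in>(\<lambda>b. a0 @ b) ` B. w x) = (\<Sum>b\<in>B. w (a0 @ b))"
      by (rule sum.reindex[OF inj, unfolded comp_def])
    also have "\<dots> = (\<Sum>b\<in>B. w a0 * (cc / real (card (\<Union>A))) ^ length b)"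
      using a0 a0T UA by (intro sum.cong refl) (auto simp: B_def w_append_cover)
    also have "\<dots> = (\<Sum>n<N. \<Sum>b\<in>{b. set b \<subseteq> A \<and> length b = n}. w a0 * (cc / real (card (\<Union>A))) ^ length b)"
    proof -
      have "B = (\<Union>n<N. {b. set b \<subseteq> A \<and> length b = n})" unfolding B_def by auto
      then show ?thesis
        by (simp only:) (rule sum.UNION_disjoint, auto intro: finite_lists_length_eq[OF fA])
    qed
    also have "\<dots> = (\<Sum>n<N. w a0 * q ^ n)"
    proof (rule sum.cong[OF refl])
      fix n
      have "(\<Sum>b\<in>{b. set b \<subseteq> A \<and> length b = n}. w a0 * (cc / real (card (\<Union>A))) ^ length b)
          = w a0 * (\<Sum>b\<in>{b. set b \<subseteq> A \<and> length b = n}. prod_list (map (\<lambda>_. cc / real (card (\<Union>A))) b))"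
        by (simp add: sum_distrib_left prod_list_const_map)
      also have "\<dots> = w a0 * q ^ n"
        using sum_lists_level[OF fA, of "\<lambda>_. cc / real (card (\<Union>A))" n] by (simp add: q_def)
      finally show "(\<Sum>b\<in>{b. set b \<subseteq> A \<and> length b = n}. w a0 * (cc / real (card (\<Union>A))) ^ length b)
          = w a0 * q ^ n" .
    qed
    finally have eq: "(\<Sum>x\<in>(\<lambda>b. a0 @ b) ` B. w x) = (\<Sum>n<N. w a0 * q ^ n)" .
    have "w a0 * real N = (\<Sum>n<N. w a0 * 1)" by simp
    also have "\<dots> \<le> (\<Sum>n<N. w a0 * q ^ n)"
      using w0 q1 by (intro sum_mono mult_left_mono one_le_power) auto
    also have "\<dots> = (\<Sum>x\<in>(\<lambda>b. a0 @ b) ` B. w x)" using eq by simp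
    also have "\<dots> \<le> 1 / p []"
    proof (rule finite_sum_le_has_sum[OF ws])
      show "finite ((\<lambda>b. a0 @ b) ` B)" using fB by simp
      show "(\<lambda>b. a0 @ b) ` B \<subseteq> St"
      proof
        fix x assume "x \<in> (\<lambda>b. a0 @ b) ` B"
        then obtain b where "x = a0 @ b" "set b \<subseteq> A" by (auto simp: B_def)
        then have "set x \<subseteq> Ty" using a0T A(1) by auto
        then show "x \<in> St" by (simp add: States_def)
      qed
      fix x assume "x \<in> St - (\<lambda>b. a0 @ b) ` B"
      then show "0 \<le> w x" using w_pos by (auto simp: States_def intro: less_imp_le)
    qed
    finally show ?thesis .
  qed
  obtain N :: nat where "1 / p [] / w a0 < real N" using reals_Archimedean2 by blast
  moreover have "p [] > 0" using p0_pos_w_sum(1)[OF st] .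
  ultimately have "1 / p [] < w a0 * real N" using w0 by (simp add: field_simps)
  then show False using bound[of N] by simp
qed

lemma Ty_elem: "\<forall>t\<in>Ty. finite t \<and> t \<noteq> {}"
  using Ty_fin Ty_ne by blast

lemma St_def': "St = {b. set b \<subseteq> Ty}" by (simp add: States_def)

lemma card_take_Tuples:
  assumes "ts \<in> Tuples K d i" "j \<le> i"
  shows "card (set (take j ts)) = j"
  using assms by (simp add: Tuples_def distinct_card)

lemma set_take_Tuples: "ts \<in> Tuples K d i \<Longrightarrow> set (take j ts) \<subseteq> Ty"
  by (auto simp: Tuples_def dest: in_set_takeD)

lemma factor_scale:
  fixes a b :: complex
  shows "(of_real cc * a) / (of_real (real (F ts j)) - of_nat j * (of_real cc * b))
       = (of_real lam * a) / (of_real (mu * real CC * real (F ts j)) - of_nat j * of_real lam * b)"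
proof -
  have k: "(of_real (mu * real CC) :: complex) \<noteq> 0" using mu_pos CC_pos by simp
  have l: "cc * (mu * real CC) = lam" using cc_mu CC_pos by (simp add: field_simps)
  have "(of_real cc * a) / (of_real (real (F ts j)) - of_nat j * (of_real cc * b))
      = ((of_real cc * a) * of_real (mu * real CC)) /
        ((of_real (real (F ts j)) - of_nat j * (of_real cc * b)) * of_real (mu * real CC))"
    using k by simp
  also have "(of_real cc * a) * of_real (mu * real CC) = of_real (cc * (mu * real CC)) * a"
    by (simp add: algebra_simps)
  also have "(of_real (real (F ts j)) - of_nat j * (of_real cc * b)) * of_real (mu * real CC)
      = of_real (mu * real CC * real (F ts j)) - of_nat j * of_real (cc * (mu * real CC)) * b"
    by (simp add: algebra_simps)
  finally show ?thesis unfolding l .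
qed

theorem genfun:
  assumes st: "stationary_dist K d lam mu p" and z: "norm z < 1"
  shows "gen_fun_M K d p z =
           (\<Sum>i=0..(K choose d). \<Sum>ts\<in>Tuples K d i.
              (complex_of_real lam * z) ^ i * complex_of_real (p []) /
              (\<Prod>j=1..i. complex_of_real (mu * real (K choose d) * real (F ts j))
                          - of_nat j * complex_of_real lam * z))"
proof -
  define h where "h = (\<lambda>_::nat set. complex_of_real cc * z)"
  have cond: "\<forall>A\<subseteq>Ty. A \<noteq> {} \<longrightarrow> (\<Sum>a\<in>A. norm (h a)) < real (card (\<Union>A))"
  proof (intro allI impI)
    fix A assume A: "A \<subseteq> Ty" "A \<noteq> {}"
    have "(\<Sum>a\<in>A. norm (h a)) = real (card A) * cc * norm z"
      unfolding h_def using cc_pos by (simp add: norm_mult)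
    also have "\<dots> \<le> real (card A) * cc" using z cc_pos
      by (intro mult_left_le) auto
    also have "\<dots> < real (card (\<Union>A))" by (rule stability_cond[OF st A])
    finally show "(\<Sum>a\<in>A. norm (h a)) < real (card (\<Union>A))" .
  qed
  have cf: "(wt h {} has_sum Phi h Ty {}) St"
    unfolding St_def' by (rule CF[OF finite_Types Ty_elem cond])
  have u: "\<forall>x\<in>St. p x = p [] * w x" by (rule uniqueness[OF st])
  have "gen_fun_M K d p z = infsum (\<lambda>xs. complex_of_real (p []) * wt h {} xs) St"
    unfolding gen_fun_M_def
  proof (rule infsum_cong)
    fix xs assume "xs \<in> St"
    then have "p xs = p [] * w xs" using u by auto
    moreover have "wt h {} xs = complex_of_real (w xs) * z ^ length xs"
      unfolding h_def w_def wt_const_mult wt_of_real ..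
    ultimately show "complex_of_real (p xs) * z ^ length xs = complex_of_real (p []) * wt h {} xs"
      by simp
  qed
  also have "\<dots> = complex_of_real (p []) * Phi h Ty {}"
    by (rule infsumI[OF has_sum_cmult_right[OF cf]])
  also have "Phi h Ty {} = (\<Sum>i=0..(K choose d). \<Sum>ts\<in>Tuples K d i. tw h {} ts)"
    unfolding Phi_def by (simp add: sum_DT_Tuples)
  also have "complex_of_real (p []) * (\<Sum>i=0..(K choose d). \<Sum>ts\<in>Tuples K d i. tw h {} ts)
      = (\<Sum>i=0..(K choose d). \<Sum>ts\<in>Tuples K d i.
              (complex_of_real lam * z) ^ i * complex_of_real (p []) /
              (\<Prod>j=1..i. complex_of_real (mu * real (K choose d) * real (F ts j))
                          - of_nat j * complex_of_real lam * z))"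
    unfolding sum_distrib_left
  proof (intro sum.cong refl)
    fix i ts assume ts: "ts \<in> Tuples K d i"
    have li: "length ts = i" using ts by (simp add: Tuples_def)
    have "tw h {} ts = (\<Prod>j=1..i. (complex_of_real lam * z) /
            (complex_of_real (mu * real (K choose d) * real (F ts j)) - of_nat j * complex_of_real lam * z))"
      unfolding tw_prod li
    proof (rule prod.cong[OF refl])
      fix j assume j: "j \<in> {1..i}"
      have cj: "card (set (take j ts)) = j" using card_take_Tuples[OF ts] j by simp
      have "(\<Sum>a\<in>{} \<union> set (take j ts). h a) = of_nat j * (complex_of_real cc * z)"
        using cj unfolding h_def by simp
      moreover have "card (\<Union>({} \<union> set (take j ts))) = F ts j" by (simp add: F_def)
      ultimately have "h (ts ! (j - 1)) /
          (of_nat (card (\<Union>({} \<union> set (take j ts)))) - (\<Sum>a\<in>{} \<union> set (take j ts). h a))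
          = (of_real cc * z) / (of_real (real (F ts j)) - of_nat j * (of_real cc * z))"
        unfolding h_def by simp
      also have "\<dots> = (of_real lam * z) / (of_real (mu * real CC * real (F ts j)) - of_nat j * of_real lam * z)"
        by (rule factor_scale)
      finally show "h (ts ! (j - 1)) /
          (of_nat (card (\<Union>({} \<union> set (take j ts)))) - (\<Sum>a\<in>{} \<union> set (take j ts). h a))
          = (complex_of_real lam * z) /
            (complex_of_real (mu * real (K choose d) * real (F ts j)) - of_nat j * complex_of_real lam * z)"
        by (simp add: CC_def)
    qed
    also have "\<dots> = (complex_of_real lam * z) ^ i /
        (\<Prod>j=1..i. complex_of_real (mu * real (K choose d) * real (F ts j)) - of_nat j * complex_of_real lam * z)"
      by (simp add: prod_dividef)
    finally show "complex_of_real (p []) * tw h {} ts =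
          (complex_of_real lam * z) ^ i * complex_of_real (p []) /
              (\<Prod>j=1..i. complex_of_real (mu * real (K choose d) * real (F ts j))
                          - of_nat j * complex_of_real lam * z)" by simp
  qed
  finally show ?thesis .
qed

end


lemma has_sum_finite_sum:
  fixes f :: "'i \<Rightarrow> 'a \<Rightarrow> complex"
  assumes "finite I" "\<And>i. i \<in> I \<Longrightarrow> (f i has_sum S i) A"
  shows "((\<lambda>x. \<Sum>i\<in>I. f i x) has_sum (\<Sum>i\<in>I. S i)) A"
  using assms
proof (induction I rule: finite_induct)
  case empty then show ?case by simp
next
  case (insert i I)
  then show ?case by (simp add: has_sum_add)
qed

context coc
begin

lemma D_snoc: "(\<Sum>j<length (x @ [T]). svc_rate mu (x @ [T]) j)
    = svc_rate mu (x @ [T]) (length x) + (\<Sum>j<length x. svc_rate mu x j)"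
  by (simp add: svc_rate_snoc)

lemma tl_rec:
  "tagged_lt mu s (x @ [T]) =
     (complex_of_real (svc_rate mu (x @ [T]) (length x))
      + (\<Sum>j<length x. complex_of_real (svc_rate mu x j) * tagged_lt mu s (del_at j x @ [T])))
     / (complex_of_real (\<Sum>j<length (x @ [T]). svc_rate mu (x @ [T]) j) + s)"
proof -
  have "tagged_lt mu s (x @ [T]) = tagged_lt_aux mu s (Suc (length x)) (x @ [T])"
    by (simp add: tagged_lt_def)
  also have "\<dots> = (complex_of_real (svc_rate mu (x @ [T]) (length x))
      + (\<Sum>j<length x. complex_of_real (svc_rate mu (x @ [T]) j) * tagged_lt_aux mu s (length x) (del_at j (x @ [T]))))
     / (complex_of_real (\<Sum>j<length (x @ [T]). svc_rate mu (x @ [T]) j) + s)"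
    by simp
  also have "(\<Sum>j<length x. complex_of_real (svc_rate mu (x @ [T]) j) * tagged_lt_aux mu s (length x) (del_at j (x @ [T])))
      = (\<Sum>j<length x. complex_of_real (svc_rate mu x j) * tagged_lt mu s (del_at j x @ [T]))"
  proof (rule sum.cong[OF refl])
    fix j assume j: "j \<in> {..<length x}"
    have l: "length (del_at j x @ [T]) = length x" using j by simp
    have "tagged_lt_aux mu s (length x) (del_at j (x @ [T])) = tagged_lt mu s (del_at j x @ [T])"
      using j unfolding tagged_lt_def l by (simp add: del_at_snoc)
    then show "complex_of_real (svc_rate mu (x @ [T]) j) * tagged_lt_aux mu s (length x) (del_at j (x @ [T]))
        = complex_of_real (svc_rate mu x j) * tagged_lt mu s (del_at j x @ [T])"
      using j by (simp add: svc_rate_snoc)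
  qed
  finally show ?thesis .
qed

lemma Re_den_pos:
  assumes "Re s > 0"
  shows "Re (complex_of_real (\<Sum>j<length xs. svc_rate mu xs j) + s) > 0"
  using assms sum_nonneg[of "{..<length xs}" "\<lambda>j. svc_rate mu xs j"] svc_rate_nonneg by simp

lemma aux_holo:
  "(\<lambda>s. tagged_lt_aux mu s n xs) holomorphic_on {s. Re s > 0}"
proof (induction n arbitrary: xs)
  case 0 then show ?case by simp
next
  case (Suc n)
  have nz: "complex_of_real (\<Sum>j<length xs. svc_rate mu xs j) + s \<noteq> 0" if "s \<in> {s. Re s > 0}" for s
    using Re_den_pos[of s xs] that by (metis less_irrefl mem_Collect_eq zero_complex.sel(1))
  show ?case unfolding tagged_lt_aux.simps
    by (intro holomorphic_intros Suc nz) auto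
qed

lemma tl_holo: "(\<lambda>s. tagged_lt mu s xs) holomorphic_on {s. Re s > 0}"
  unfolding tagged_lt_def by (rule aux_holo)

lemma tl_bound:
  assumes s: "Re s > 0"
  shows "norm (tagged_lt mu s (x @ [T])) \<le> 1"
proof (induction "length x" arbitrary: x rule: less_induct)
  case less
  define D where "D = (\<Sum>j<length (x @ [T]). svc_rate mu (x @ [T]) j)"
  have D: "D = svc_rate mu (x @ [T]) (length x) + (\<Sum>j<length x. svc_rate mu x j)"
    unfolding D_def by (rule D_snoc)
  have Dn: "D \<ge> 0" unfolding D_def by (intro sum_nonneg svc_rate_nonneg)
  have num: "norm (complex_of_real (svc_rate mu (x @ [T]) (length x))
      + (\<Sum>j<length x. complex_of_real (svc_rate mu x j) * tagged_lt mu s (del_at j x @ [T]))) \<le> D"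
  proof -
    have "norm (\<Sum>j<length x. complex_of_real (svc_rate mu x j) * tagged_lt mu s (del_at j x @ [T]))
        \<le> (\<Sum>j<length x. norm (complex_of_real (svc_rate mu x j) * tagged_lt mu s (del_at j x @ [T])))"
      by (rule norm_sum)
    also have "\<dots> \<le> (\<Sum>j<length x. svc_rate mu x j)"
    proof (rule sum_mono)
      fix j assume j: "j \<in> {..<length x}"
      have "length (del_at j x) < length x" using j by simp
      then have "norm (tagged_lt mu s (del_at j x @ [T])) \<le> 1" using less by blast
      then show "norm (complex_of_real (svc_rate mu x j) * tagged_lt mu s (del_at j x @ [T])) \<le> svc_rate mu x j"
        using svc_rate_nonneg[of x j] by (simp add: norm_mult mult_left_le)
    qed
    finally have S: "norm (\<Sum>j<length x. complex_of_real (svc_rate mu x j) * tagged_lt mu s (del_at j x @ [T]))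
        \<le> (\<Sum>j<length x. svc_rate mu x j)" .
    have "norm (complex_of_real (svc_rate mu (x @ [T]) (length x))
      + (\<Sum>j<length x. complex_of_real (svc_rate mu x j) * tagged_lt mu s (del_at j x @ [T])))
      \<le> norm (complex_of_real (svc_rate mu (x @ [T]) (length x)))
       + norm (\<Sum>j<length x. complex_of_real (svc_rate mu x j) * tagged_lt mu s (del_at j x @ [T]))"
      by (rule norm_triangle_ineq)
    also have "norm (complex_of_real (svc_rate mu (x @ [T]) (length x))) = svc_rate mu (x @ [T]) (length x)"
      using svc_rate_nonneg[of "x @ [T]" "length x"] by simp
    finally show ?thesis using S D by simp
  qed
  have den: "norm (complex_of_real D + s) \<ge> D"
  proof -
    have "D \<le> Re (complex_of_real D + s)" using s by simp
    also have "\<dots> \<le> norm (complex_of_real D + s)" by (rule complex_Re_le_cmod)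
    finally show ?thesis .
  qed
  have dp: "norm (complex_of_real D + s) > 0" using den s Dn
    by (metis complex_Re_le_cmod less_eq_real_def order.strict_trans1 plus_complex.simps(1) Re_complex_of_real
        add.commute add_strict_increasing)
  have "norm (tagged_lt mu s (x @ [T])) = norm (complex_of_real (svc_rate mu (x @ [T]) (length x))
      + (\<Sum>j<length x. complex_of_real (svc_rate mu x j) * tagged_lt mu s (del_at j x @ [T])))
      / norm (complex_of_real D + s)"
    by (subst tl_rec) (simp add: D_def norm_divide)
  also have "\<dots> \<le> D / norm (complex_of_real D + s)"
    using num dp by (simp add: divide_right_mono)
  also have "\<dots> \<le> 1" using den dp by simp
  finally show ?case .
qed

end


lemma ins_at_end: "ins_at (length xs) t xs = xs @ [t]"
  by (simp add: ins_at_def)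

lemma summable_bound:
  fixes f :: "'a \<Rightarrow> complex"
  assumes "g summable_on A" "\<And>x. x \<in> A \<Longrightarrow> norm (f x) \<le> g x"
  shows "f summable_on A"
  by (rule abs_summable_summable, rule Infinite_Sum.abs_summable_on_comparison_test'[OF assms])

locale soj = coc +
  fixes p :: "nat set list \<Rightarrow> real" and T :: "nat set" and \<zeta> :: complex
  assumes st: "stationary_dist K d lam mu p" and T: "T \<in> Ty" and zeta: "norm \<zeta> < 1"
begin

definition sv :: complex where "sv = of_real (lam / real CC) * (1 - \<zeta>)"
definition hT :: "nat set \<Rightarrow> complex" where "hT a = of_real cc * (if a = T then \<zeta> else 1)"
definition R :: "nat set \<Rightarrow> complex" where "R V = infsum (wt hT V) St"
definition vv :: "nat set list \<Rightarrow> complex" where "vv x = tagged_lt mu sv (x @ [T])"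
definition al :: "nat set list \<Rightarrow> complex" where "al x = of_real (w (x @ [T])) * R (UU (x @ [T]))"
definition rho :: "nat set list \<Rightarrow> complex" where "rho x = of_real (svc_rate mu (x @ [T]) (length x))"

lemma Re_sv: "Re sv > 0"
proof -
  have "Re \<zeta> \<le> norm \<zeta>" by (rule complex_Re_le_cmod)
  then have "Re \<zeta> < 1" using zeta by simp
  then show ?thesis unfolding sv_def using lam_pos CC_pos by simp
qed

lemma norm_hT: "norm (hT a) \<le> cc"
  unfolding hT_def using zeta cc_pos by (auto simp: norm_mult)

lemma cond_hT: "\<forall>A\<subseteq>Ty. A \<noteq> {} \<longrightarrow> (\<Sum>a\<in>A. norm (hT a)) < real (card (\<Union>A))"
proof (intro allI impI)
  fix A assume A: "A \<subseteq> Ty" "A \<noteq> {}"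
  have "(\<Sum>a\<in>A. norm (hT a)) \<le> (\<Sum>a\<in>A. cc)" by (intro sum_mono norm_hT)
  also have "\<dots> = real (card A) * cc" by simp
  also have "\<dots> < real (card (\<Union>A))" by (rule stability_cond[OF st A])
  finally show "(\<Sum>a\<in>A. norm (hT a)) < real (card (\<Union>A))" .
qed

lemma wt_hT_summable: "A \<subseteq> Ty \<Longrightarrow> V = \<Union>A \<Longrightarrow> wt hT V summable_on St"
  using CF_gen[OF finite_Types Ty_elem cond_hT, of A] unfolding St_def' summable_on_def by blast

lemma wt_hT_has_sum: "A \<subseteq> Ty \<Longrightarrow> V = \<Union>A \<Longrightarrow> (wt hT V has_sum R V) St"
  unfolding R_def using wt_hT_summable by simp

lemma Rset_St: "Rset Ty {} = St"
  by (simp add: Rset_empty St_def')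

lemma R_rec:
  assumes A: "A \<subseteq> Ty"
  shows "R (\<Union>A) = 1 + (\<Sum>t\<in>Ty. hT t / of_nat (card (\<Union>A \<union> t)) * R (\<Union>A \<union> t))"
proof -
  have "(wt hT (\<Union>A) has_sum (1 + (\<Sum>t\<in>Ty - {}. hT t / of_nat (card (\<Union>A \<union> t)) * R (\<Union>A \<union> t)))) (Rset Ty {})"
  proof (rule first_step[OF finite_Types])
    fix t assume t: "t \<in> Ty - {}"
    have "\<Union>A \<union> t = \<Union>(insert t A)" by auto
    then show "(wt hT (\<Union>A \<union> t) has_sum R (\<Union>A \<union> t)) {b. set b \<subseteq> Ty}"
      using wt_hT_has_sum[of "insert t A" "\<Union>A \<union> t"] t A unfolding St_def' by blast
  qed
  then show ?thesis unfolding Rset_St R_def[of "\<Union>A"] by (simp add: infsumI)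
qed

lemma UU_eq: "UU x = \<Union>(set x)" by (simp add: UU_def)

lemma card_UU_snoc_pos: "x \<in> St \<Longrightarrow> card (UU (x @ [T])) > 0"
  using card_UU_pos[of "x @ [T]"] T by (simp add: States_def)

lemma inner_real:
  assumes x: "x \<in> St" and T': "T' \<in> Ty"
  shows "(\<Sum>j\<le>length x. w (ins_at j T' x @ [T]) * svc_rate mu (ins_at j T' x) j)
       = w (x @ [T]) * (lam / real CC) * real (card (UU (x @ [T]))) / real (card (UU (x @ [T]) \<union> T'))"
proof -
  define y where "y = x @ [T]"
  have yT: "set y \<subseteq> Ty" using x T by (simp add: y_def States_def)
  define V where "V = UU y"
  have fV: "finite V" unfolding V_def by (rule finite_UU[OF yT])
  have cp: "card (V \<union> T') > 0" using fV Ty_fin[OF T'] Ty_ne[OF T'] by (simp add: card_gt_0_iff)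
  have pb: "(\<Sum>j\<le>length y. w (ins_at j T' y) * svc_rate mu (ins_at j T' y) j) = w y * lam / real CC"
    by (rule partial_bal[OF yT T'])
  have "(\<Sum>j\<le>length y. w (ins_at j T' y) * svc_rate mu (ins_at j T' y) j)
      = (\<Sum>j\<le>length x. w (ins_at j T' x @ [T]) * svc_rate mu (ins_at j T' x) j)
        + w (y @ [T']) * svc_rate mu (y @ [T']) (length y)"
  proof -
    have "(\<Sum>j\<le>length y. w (ins_at j T' y) * svc_rate mu (ins_at j T' y) j)
        = (\<Sum>j\<le>length x. w (ins_at j T' y) * svc_rate mu (ins_at j T' y) j)
          + w (ins_at (length y) T' y) * svc_rate mu (ins_at (length y) T' y) (length y)"
      by (simp add: y_def)
    also have "(\<Sum>j\<le>length x. w (ins_at j T' y) * svc_rate mu (ins_at j T' y) j)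
        = (\<Sum>j\<le>length x. w (ins_at j T' x @ [T]) * svc_rate mu (ins_at j T' x) j)"
      by (intro sum.cong refl) (auto simp: y_def ins_at_snoc svc_rate_snoc)
    finally show ?thesis by (simp add: ins_at_end)
  qed
  moreover have "w (y @ [T']) * svc_rate mu (y @ [T']) (length y)
      = w y * (lam / real CC) * (real (card (V \<union> T')) - real (card V)) / real (card (V \<union> T'))"
    (is "?B = ?X")
  proof -
    have e1: "w (y @ [T']) = w y * (cc / real (card (V \<union> T')))" unfolding V_def by (rule w_snoc[OF yT])
    have e2: "svc_rate mu (y @ [T']) (length y) = mu * (real (card (V \<union> T')) - real (card V))"
      using svc_rate_snoc_last[of mu y T'] card_Un_diff_split[OF fV Ty_fin[OF T']] unfolding V_def by simp
    have "w (y @ [T']) * svc_rate mu (y @ [T']) (length y)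
        = (w y * (cc / real (card (V \<union> T')))) * (mu * (real (card (V \<union> T')) - real (card V)))"
      by (simp only: e1 e2)
    also have "\<dots> = w y * (cc * mu) * (real (card (V \<union> T')) - real (card V)) / real (card (V \<union> T'))"
      using cp by (simp add: field_simps)
    finally show ?thesis by (simp only: cc_mu)
  qed
  ultimately have "(\<Sum>j\<le>length x. w (ins_at j T' x @ [T]) * svc_rate mu (ins_at j T' x) j)
      = w y * lam / real CC - w y * (lam / real CC) * (real (card (V \<union> T')) - real (card V)) / real (card (V \<union> T'))"
    using pb by linarith
  also have "\<dots> = w y * (lam / real CC) * real (card V) / real (card (V \<union> T'))"
    using cp CC_pos by (simp add: field_simps)
  finally show ?thesis unfolding y_def V_def .
qed

lemma star:
  assumes x: "x \<in> St"
  shows "al x * (of_real (mu * real (card (UU (x @ [T])))) + sv)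
       = of_real (w x * lam / real CC)
         + (\<Sum>j\<le>length x. \<Sum>T'\<in>Ty. al (ins_at j T' x) * of_real (svc_rate mu (ins_at j T' x) j))"
proof -
  define y where "y = x @ [T]"
  have yT: "set y \<subseteq> Ty" using x T by (simp add: y_def States_def)
  define V where "V = UU y"
  have fV: "finite V" unfolding V_def by (rule finite_UU[OF yT])
  have cV: "card V > 0" unfolding V_def y_def by (rule card_UU_snoc_pos[OF x])
  have VT: "V \<union> T = V" unfolding V_def y_def by auto
  define c' where "c' = (\<lambda>T'. real (card (V \<union> T')))"
  have cp: "c' T' > 0" if "T' \<in> Ty" for T'
    using fV Ty_fin[OF that] Ty_ne[OF that] by (simp add: c'_def card_gt_0_iff)
  have alins: "al (ins_at j T' x) = of_real (w (ins_at j T' x @ [T])) * R (V \<union> T')" for j T'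
  proof -
    have "UU (ins_at j T' x @ [T]) = V \<union> T'" unfolding V_def y_def by (auto simp: UU_def)
    then show ?thesis by (simp add: al_def)
  qed
  have rhs: "(\<Sum>j\<le>length x. \<Sum>T'\<in>Ty. al (ins_at j T' x) * of_real (svc_rate mu (ins_at j T' x) j))
      = (\<Sum>T'\<in>Ty. R (V \<union> T') * of_real (w y * (lam / real CC) * real (card V) / c' T'))"
  proof -
    have "(\<Sum>j\<le>length x. \<Sum>T'\<in>Ty. al (ins_at j T' x) * of_real (svc_rate mu (ins_at j T' x) j))
        = (\<Sum>T'\<in>Ty. \<Sum>j\<le>length x. al (ins_at j T' x) * of_real (svc_rate mu (ins_at j T' x) j))"
      by (rule sum.swap)
    also have "\<dots> = (\<Sum>T'\<in>Ty. R (V \<union> T') * of_real (\<Sum>j\<le>length x. w (ins_at j T' x @ [T]) * svc_rate mu (ins_at j T' x) j))"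
      by (simp add: alins sum_distrib_left mult_ac)
    also have "\<dots> = (\<Sum>T'\<in>Ty. R (V \<union> T') * of_real (w y * (lam / real CC) * real (card V) / c' T'))"
      by (intro sum.cong refl) (simp add: inner_real[OF x] c'_def V_def y_def)
    finally show ?thesis .
  qed
  have wx: "w x * lam / real CC = w y * (mu * real (card V))"
    using partial_bal1[OF yT] unfolding V_def y_def by simp
  have Rr: "R V = 1 + (\<Sum>t\<in>Ty. hT t / of_nat (card (V \<union> t)) * R (V \<union> t))"
    using R_rec[OF yT] unfolding V_def UU_eq .
  have split: "(\<Sum>t\<in>Ty. hT t / of_nat (card (V \<union> t)) * R (V \<union> t))
      = of_real cc * (\<Sum>t\<in>Ty. R (V \<union> t) / of_real (c' t)) - of_real cc * (1 - \<zeta>) * R V / of_real (real (card V))"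
  proof -
    have "(\<Sum>t\<in>Ty. hT t / of_nat (card (V \<union> t)) * R (V \<union> t))
        = (\<Sum>t\<in>Ty. of_real cc * (R (V \<union> t) / of_real (c' t))
             - (if t = T then of_real cc * (1 - \<zeta>) * R (V \<union> t) / of_real (c' t) else 0))"
    proof (rule sum.cong[OF refl])
      fix t assume t: "t \<in> Ty"
      have nz: "(of_nat (card (V \<union> t)) :: complex) \<noteq> 0" using cp[OF t] by (simp add: c'_def)
      show "hT t / of_nat (card (V \<union> t)) * R (V \<union> t) = of_real cc * (R (V \<union> t) / of_real (c' t))
             - (if t = T then of_real cc * (1 - \<zeta>) * R (V \<union> t) / of_real (c' t) else 0)"
        using nz by (cases "t = T") (simp_all add: hT_def c'_def field_simps)
    qed
    also have "\<dots> = of_real cc * (\<Sum>t\<in>Ty. R (V \<union> t) / of_real (c' t))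
        - of_real cc * (1 - \<zeta>) * R (V \<union> T) / of_real (c' T)"
    proof -
      have d: "(\<Sum>t\<in>Ty. (if t = T then of_real cc * (1 - \<zeta>) * R (V \<union> t) / of_real (c' t) else 0))
          = of_real cc * (1 - \<zeta>) * R (V \<union> T) / of_real (c' T)"
        using T finite_Types by (simp add: sum.delta)
      show ?thesis unfolding sum_subtractf d sum_distrib_left ..
    qed
    finally show ?thesis by (simp add: VT c'_def)
  qed
  have core: "R V * (of_real (mu * real (card V)) + sv)
      = of_real (mu * real (card V)) + of_real (lam / real CC * real (card V)) * (\<Sum>t\<in>Ty. R (V \<union> t) / of_real (c' t))"
  proof -
    have cm: "of_real mu * of_real cc = (of_real (lam / real CC) :: complex)"
      using cc_mu by (metis of_real_mult mult.commute)
    define Sg where "Sg = (\<Sum>t\<in>Ty. R (V \<union> t) / of_real (c' t))"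
    have eq: "R V = 1 + of_real cc * Sg - of_real cc * (1 - \<zeta>) * R V / of_real (real (card V))"
      using Rr split unfolding Sg_def by simp
    have nz: "(of_real (real (card V)) :: complex) \<noteq> 0" using cV by simp
    have "R V * of_real (real (card V))
        = (1 + of_real cc * Sg - of_real cc * (1 - \<zeta>) * R V / of_real (real (card V))) * of_real (real (card V))"
      using eq by simp
    also have "\<dots> = of_real (real (card V)) + of_real cc * of_real (real (card V)) * Sg - of_real cc * (1 - \<zeta>) * R V"
      using nz by (simp add: field_simps)
    finally have "R V * of_real (real (card V)) = of_real (real (card V))
        + of_real cc * of_real (real (card V)) * (\<Sum>t\<in>Ty. R (V \<union> t) / of_real (c' t)) - of_real cc * (1 - \<zeta>) * R V"
      unfolding Sg_def .
    then have E: "R V * of_real (real (card V)) = of_real (real (card V))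
        + of_real cc * of_real (real (card V)) * Sg - of_real cc * (1 - \<zeta>) * R V"
      unfolding Sg_def .
    define L where "L = (of_real (lam / real CC) :: complex)"
    define cVc where "cVc = (of_real (real (card V)) :: complex)"
    have cm': "of_real mu * of_real cc = L" unfolding L_def using cm .
    have "of_real mu * (R V * cVc) = of_real mu * (cVc + of_real cc * cVc * Sg - of_real cc * (1 - \<zeta>) * R V)"
      using E unfolding cVc_def by simp
    also have "\<dots> = of_real mu * cVc + (of_real mu * of_real cc) * cVc * Sg - (of_real mu * of_real cc) * (1 - \<zeta>) * R V"
      by (simp add: algebra_simps)
    finally have E2: "of_real mu * (R V * cVc) = of_real mu * cVc + L * cVc * Sg - L * (1 - \<zeta>) * R V"
      unfolding cm' .
    have "R V * (of_real (mu * real (card V)) + sv) = of_real mu * (R V * cVc) + L * (1 - \<zeta>) * R V"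
      unfolding sv_def L_def cVc_def by (simp add: algebra_simps)
    also have "\<dots> = of_real mu * cVc + L * cVc * Sg" using E2 by simp
    also have "\<dots> = of_real (mu * real (card V)) + of_real (lam / real CC * real (card V)) * Sg"
      unfolding L_def cVc_def by (simp add: algebra_simps)
    finally show ?thesis unfolding Sg_def .
  qed
  have "al x * (of_real (mu * real (card (UU (x @ [T])))) + sv) = of_real (w y) * (R V * (of_real (mu * real (card V)) + sv))"
    by (simp add: al_def V_def y_def)
  also have "\<dots> = of_real (w y * (mu * real (card V)))
      + (\<Sum>T'\<in>Ty. R (V \<union> T') * of_real (w y * (lam / real CC) * real (card V) / c' T'))"
    unfolding core by (simp add: algebra_simps sum_distrib_left)
  also have "\<dots> = of_real (w x * lam / real CC)
         + (\<Sum>j\<le>length x. \<Sum>T'\<in>Ty. al (ins_at j T' x) * of_real (svc_rate mu (ins_at j T' x) j))"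
    by (simp only: rhs wx)
  finally show ?thesis .
qed

end


lemma summable_bound_b:
  fixes f :: "'a \<Rightarrow> 'b::banach"
  assumes "g summable_on A" "\<And>x. x \<in> A \<Longrightarrow> norm (f x) \<le> g x"
  shows "f summable_on A"
  by (rule abs_summable_summable, rule Infinite_Sum.abs_summable_on_comparison_test'[OF assms])

context soj
begin

lemma w_summ: "w summable_on St"
  using p0_pos_w_sum(2)[OF st] by (auto simp: summable_on_def)

lemma w_nonneg: "x \<in> St \<Longrightarrow> w x \<ge> 0"
  using w_pos by (auto simp: States_def intro: less_imp_le)

lemma snoc_St: "x \<in> St \<Longrightarrow> x @ [T] \<in> St"
  using T by (simp add: States_def)

lemma wT_summ: "(\<lambda>x. w (x @ [T])) summable_on St"
proof -
  have inj: "inj_on (\<lambda>x. x @ [T]) St" by (auto intro: inj_onI)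
  have "w summable_on ((\<lambda>x. x @ [T]) ` St)"
    by (rule summable_on_subset_banach[OF w_summ]) (auto intro: snoc_St)
  then show ?thesis using summable_on_reindex[OF inj, of w] by (simp add: comp_def)
qed

definition RB :: real where "RB = (\<Sum>V\<in>Pow {..<K}. norm (R V))"

lemma R_bound: "x \<in> St \<Longrightarrow> norm (R (UU (x @ [T]))) \<le> RB"
proof -
  assume x: "x \<in> St"
  have "UU (x @ [T]) \<in> Pow {..<K}" using UU_sub[of "x @ [T]" K d] snoc_St[OF x] by (simp add: States_def)
  then show ?thesis unfolding RB_def by (intro member_le_sum) auto
qed

lemma RB_nonneg: "RB \<ge> 0" unfolding RB_def by (intro sum_nonneg) auto

lemma al_bound: "x \<in> St \<Longrightarrow> norm (al x) \<le> RB * w (x @ [T])"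
proof -
  assume x: "x \<in> St"
  have "norm (al x) = w (x @ [T]) * norm (R (UU (x @ [T])))"
    unfolding al_def using w_nonneg[OF snoc_St[OF x]] by (simp add: norm_mult)
  also have "\<dots> \<le> w (x @ [T]) * RB" using R_bound[OF x] w_nonneg[OF snoc_St[OF x]] by (rule mult_left_mono)
  finally show ?thesis by (simp add: mult.commute)
qed

lemma alB_summ: "(\<lambda>x. RB * w (x @ [T])) summable_on St"
  using summable_on_cmult_right[OF wT_summ] by simp

lemma vv_bound: "norm (vv x) \<le> 1"
  unfolding vv_def by (rule tl_bound[OF Re_sv])

lemma rate_le: "y \<in> St \<Longrightarrow> j < length y \<Longrightarrow> svc_rate mu y j \<le> mu * real K"
proof -
  assume y: "y \<in> St" "j < length y"
  then have yj: "y ! j \<in> Ty" by (auto simp: States_def)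
  have "card (y ! j - \<Union> (set (take j y))) \<le> card (y ! j)"
    using Ty_fin[OF yj] by (intro card_mono) auto
  also have "\<dots> = d" using Types_card[OF yj] .
  finally have "real (card (y ! j - \<Union> (set (take j y)))) \<le> real K" using dK by linarith
  then show ?thesis unfolding svc_rate_def using mu_pos by (simp add: mult_left_mono)
qed

lemma Dr_le: "y \<in> St \<Longrightarrow> (\<Sum>j<length y. svc_rate mu y j) \<le> mu * real K"
proof -
  assume y: "y \<in> St"
  have "(\<Sum>j<length y. svc_rate mu y j) = mu * real (card (UU y))" using D_St y by (simp add: States_def)
  also have "\<dots> \<le> mu * real K"
  proof -
    have "card (UU y) \<le> card {..<K}" using UU_sub[of y K d] y by (intro card_mono) (auto simp: States_def)
    then show ?thesis using mu_pos by simp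
  qed
  finally show ?thesis .
qed

definition Sig1 where "Sig1 = Sigma St (\<lambda>y. {..<length y})"
definition Sig2 where "Sig2 = Sigma St (\<lambda>x. {..length x} \<times> Ty)"
definition phi :: "nat set list \<Rightarrow> nat \<Rightarrow> complex" where
  "phi y j = al y * of_real (svc_rate mu y j) * vv (del_at j y)"
definition psi :: "nat set list \<Rightarrow> nat \<times> nat set \<Rightarrow> complex" where
  "psi x z = al (ins_at (fst z) (snd z) x) * of_real (svc_rate mu (ins_at (fst z) (snd z) x) (fst z)) * vv x"

lemma g_summ: "(\<lambda>(y, j). RB * w (y @ [T]) * svc_rate mu y j) summable_on Sig1"
  unfolding Sig1_def
proof (rule summable_on_SigmaI[where g = "\<lambda>y. RB * w (y @ [T]) * (\<Sum>j<length y. svc_rate mu y j)"])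
  fix y assume "y \<in> St"
  show "((\<lambda>j. case (y, j) of (y, j) \<Rightarrow> RB * w (y @ [T]) * svc_rate mu y j) has_sum
        RB * w (y @ [T]) * (\<Sum>j<length y. svc_rate mu y j)) {..<length y}"
    by (intro has_sum_finiteI) (simp_all add: sum_distrib_left)
next
  show "(\<lambda>y. RB * w (y @ [T]) * (\<Sum>j<length y. svc_rate mu y j)) summable_on St"
  proof (rule summable_bound_b[where g = "\<lambda>y. (mu * real K) * (RB * w (y @ [T]))"])
    show "(\<lambda>y. (mu * real K) * (RB * w (y @ [T]))) summable_on St"
      by (rule summable_on_cmult_right[OF alB_summ])
    fix y assume y: "y \<in> St"
    have a: "RB * w (y @ [T]) \<ge> 0" using RB_nonneg w_nonneg[OF snoc_St[OF y]] by simp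
    have b: "(\<Sum>j<length y. svc_rate mu y j) \<ge> 0" by (intro sum_nonneg svc_rate_nonneg)
    show "norm (RB * w (y @ [T]) * (\<Sum>j<length y. svc_rate mu y j)) \<le> mu * real K * (RB * w (y @ [T]))"
    proof -
      have "norm (RB * w (y @ [T]) * (\<Sum>j<length y. svc_rate mu y j)) = RB * w (y @ [T]) * (\<Sum>j<length y. svc_rate mu y j)"
        using a b by (simp add: abs_of_nonneg)
      also have "\<dots> \<le> RB * w (y @ [T]) * (mu * real K)" using a Dr_le[OF y] by (rule mult_left_mono[rotated])
      finally show ?thesis by (simp add: mult.commute)
    qed
  qed
next
  fix y j assume "y \<in> St" "j \<in> {..<length y}"
  then show "0 \<le> (case (y, j) of (y, j) \<Rightarrow> RB * w (y @ [T]) * svc_rate mu y j)"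
    using RB_nonneg w_nonneg[OF snoc_St] svc_rate_nonneg by simp
qed

lemma phi_summ: "(\<lambda>(y, j). phi y j) summable_on Sig1"
proof (rule summable_bound_b[OF g_summ])
  fix z assume z: "z \<in> Sig1"
  then obtain y j where zz: "z = (y, j)" "y \<in> St" by (auto simp: Sig1_def)
  have "norm (phi y j) = norm (al y) * svc_rate mu y j * norm (vv (del_at j y))"
    unfolding phi_def using svc_rate_nonneg[of y j] by (simp add: norm_mult)
  also have "\<dots> \<le> (RB * w (y @ [T])) * svc_rate mu y j * 1"
    using al_bound[OF zz(2)] vv_bound svc_rate_nonneg[of y j] RB_nonneg w_nonneg[OF snoc_St[OF zz(2)]]
    by (intro mult_mono) (auto intro: mult_nonneg_nonneg)
  finally show "norm (case z of (y, j) \<Rightarrow> phi y j) \<le> (case z of (y, j) \<Rightarrow> RB * w (y @ [T]) * svc_rate mu y j)"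
    using zz by simp
qed

lemma reindex12:
  "((\<lambda>(x, z). psi x z) has_sum S) Sig2 \<longleftrightarrow> ((\<lambda>(y, j). phi y j) has_sum S) Sig1"
  unfolding Sig1_def Sig2_def
proof (rule has_sum_reindex_bij_witness[where j = "\<lambda>(x, z). (ins_at (fst z) (snd z) x, fst z)"
      and i = "\<lambda>(y, j). (del_at j y, (j, y ! j))"])
  fix a assume a: "a \<in> Sigma St (\<lambda>x. {..length x} \<times> Ty)"
  then obtain x j T' where aa: "a = (x, (j, T'))" "x \<in> St" "j \<le> length x" "T' \<in> Ty" by auto
  show "(case case a of (x, z) \<Rightarrow> (ins_at (fst z) (snd z) x, fst z) of (y, j) \<Rightarrow> (del_at j y, j, y ! j)) = a"
    using aa by simp
  show "(case a of (x, z) \<Rightarrow> (ins_at (fst z) (snd z) x, fst z)) \<in> Sigma St (\<lambda>y. {..<length y})"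
    using aa by (auto simp: States_def)
  show "(case case a of (x, z) \<Rightarrow> (ins_at (fst z) (snd z) x, fst z) of (y, j) \<Rightarrow> phi y j) =
        (case a of (x, z) \<Rightarrow> psi x z)"
    using aa by (simp add: phi_def psi_def)
next
  fix b assume b: "b \<in> Sigma St (\<lambda>y. {..<length y})"
  then obtain y j where bb: "b = (y, j)" "y \<in> St" "j < length y" by auto
  show "(case case b of (y, j) \<Rightarrow> (del_at j y, j, y ! j) of (x, z) \<Rightarrow> (ins_at (fst z) (snd z) x, fst z)) = b"
    using bb by (simp add: ins_del_at)
  have "set (del_at j y) \<subseteq> Ty" using bb set_del_at[of j y] by (auto simp: States_def)
  moreover have "y ! j \<in> Ty" using bb by (auto simp: States_def)
  ultimately show "(case b of (y, j) \<Rightarrow> (del_at j y, j, y ! j)) \<in> Sigma St (\<lambda>x. {..length x} \<times> Ty)"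
    using bb by (auto simp: States_def)
qed simp

definition Dn :: "nat set list \<Rightarrow> complex" where
  "Dn x = of_real (mu * real (card (UU (x @ [T])))) + sv"

lemma E1:
  assumes x: "x \<in> St"
  shows "al x * Dn x * vv x = al x * rho x + (\<Sum>j<length x. phi x j)"
proof -
  have D: "(\<Sum>j<length (x @ [T]). svc_rate mu (x @ [T]) j) = mu * real (card (UU (x @ [T])))"
    by (rule D_St) (use snoc_St[OF x] in \<open>simp add: States_def\<close>)
  have nz: "Dn x \<noteq> 0"
    using Re_den_pos[OF Re_sv, of "x @ [T]"] unfolding Dn_def D
    by (metis less_irrefl zero_complex.sel(1))
  have "vv x = (rho x + (\<Sum>j<length x. complex_of_real (svc_rate mu x j) * vv (del_at j x)))
      / (complex_of_real (\<Sum>j<length (x @ [T]). svc_rate mu (x @ [T]) j) + sv)"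
    unfolding vv_def rho_def by (rule tl_rec)
  then have "vv x = (rho x + (\<Sum>j<length x. complex_of_real (svc_rate mu x j) * vv (del_at j x))) / Dn x"
    unfolding Dn_def D .
  then have "vv x * Dn x = rho x + (\<Sum>j<length x. complex_of_real (svc_rate mu x j) * vv (del_at j x))"
    using nz by simp
  then have "al x * Dn x * vv x = al x * (rho x + (\<Sum>j<length x. complex_of_real (svc_rate mu x j) * vv (del_at j x)))"
    by (simp add: mult.commute mult.left_commute)
  also have "\<dots> = al x * rho x + (\<Sum>j<length x. phi x j)"
    by (simp add: phi_def distrib_left sum_distrib_left mult.assoc)
  finally show ?thesis .
qed

lemma E2:
  assumes x: "x \<in> St"
  shows "al x * Dn x * vv x = vv x * of_real (w x * lam / real CC) + (\<Sum>z\<in>{..length x} \<times> Ty. psi x z)"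
proof -
  have st: "al x * Dn x = of_real (w x * lam / real CC)
         + (\<Sum>j\<le>length x. \<Sum>T'\<in>Ty. al (ins_at j T' x) * of_real (svc_rate mu (ins_at j T' x) j))"
    unfolding Dn_def by (rule star[OF x])
  have "al x * Dn x * vv x = (of_real (w x * lam / real CC)
         + (\<Sum>j\<le>length x. \<Sum>T'\<in>Ty. al (ins_at j T' x) * of_real (svc_rate mu (ins_at j T' x) j))) * vv x"
    by (simp only: st)
  also have "\<dots> = vv x * of_real (w x * lam / real CC) + (\<Sum>j\<le>length x. \<Sum>T'\<in>Ty. psi x (j, T'))"
    unfolding distrib_right sum_distrib_right by (simp add: psi_def mult_ac)
  also have "(\<Sum>j\<le>length x. \<Sum>T'\<in>Ty. psi x (j, T')) = (\<Sum>z\<in>{..length x} \<times> Ty. psi x z)"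
    by (simp add: sum.cartesian_product)
  finally show ?thesis .
qed

lemma adjoint:
  "infsum (\<lambda>x. al x * rho x) St = infsum (\<lambda>x. vv x * of_real (w x * lam / real CC)) St"
proof -
  define S0 where "S0 = infsum (\<lambda>(y, j). phi y j) Sig1"
  have hphi: "((\<lambda>(y, j). phi y j) has_sum S0) Sig1" using phi_summ unfolding S0_def by simp
  have hpsi: "((\<lambda>(x, z). psi x z) has_sum S0) Sig2" using hphi by (simp add: reindex12)
  have psum: "(\<lambda>(x, z). psi x z) summable_on Sig2" using hpsi by (auto simp: summable_on_def)
  have A1: "infsum (\<lambda>y. infsum (phi y) {..<length y}) St = S0"
    using infsum_Sigma'_banach[of phi St "\<lambda>y. {..<length y}"] phi_summ unfolding S0_def Sig1_def by simp
  have A1s: "(\<lambda>y. infsum (phi y) {..<length y}) summable_on St"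
    using summable_on_Sigma_banach[of phi St "\<lambda>y. {..<length y}"] phi_summ unfolding Sig1_def by simp
  have A2: "infsum (\<lambda>x. infsum (psi x) ({..length x} \<times> Ty)) St = S0"
    using infsum_Sigma'_banach[of psi St "\<lambda>x. {..length x} \<times> Ty"] psum hpsi unfolding Sig2_def
    by (simp add: infsumI)
  have A2s: "(\<lambda>x. infsum (psi x) ({..length x} \<times> Ty)) summable_on St"
    using summable_on_Sigma_banach[of psi St "\<lambda>x. {..length x} \<times> Ty"] psum unfolding Sig2_def by simp
  have fin1: "infsum (phi y) {..<length y} = (\<Sum>j<length y. phi y j)" for y by simp
  have fin2: "infsum (psi x) ({..length x} \<times> Ty) = (\<Sum>z\<in>{..length x} \<times> Ty. psi x z)" for x
    using finite_Types by simp
  have s_ar: "(\<lambda>x. al x * rho x) summable_on St"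
  proof (rule summable_bound_b[where g = "\<lambda>x. (mu * real K) * (RB * w (x @ [T]))"])
    show "(\<lambda>x. (mu * real K) * (RB * w (x @ [T]))) summable_on St"
      by (rule summable_on_cmult_right[OF alB_summ])
    fix x assume x: "x \<in> St"
    have "norm (rho x) \<le> mu * real K"
      unfolding rho_def using rate_le[OF snoc_St[OF x], of "length x"] svc_rate_nonneg[of "x @ [T]" "length x"]
      by simp
    then have "norm (rho x) * norm (al x) \<le> (mu * real K) * (RB * w (x @ [T]))"
      using al_bound[OF x] mu_pos by (intro mult_mono) auto
    then show "norm (al x * rho x) \<le> mu * real K * (RB * w (x @ [T]))"
      by (simp add: norm_mult mult.commute)
  qed
  have s_vw: "(\<lambda>x. vv x * of_real (w x * lam / real CC)) summable_on St"
  proof (rule summable_bound_b[where g = "\<lambda>x. w x * (lam / real CC)"])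
    show "(\<lambda>x. w x * (lam / real CC)) summable_on St" by (rule summable_on_cmult_left[OF w_summ])
    fix x assume x: "x \<in> St"
    have r: "w x * lam / real CC \<ge> 0" "w x * lam \<ge> 0" using w_nonneg[OF x] lam_pos by simp_all
    have "norm (vv x * of_real (w x * lam / real CC)) = norm (vv x) * (w x * lam / real CC)"
      unfolding norm_mult norm_of_real using r by simp
    also have "\<dots> \<le> 1 * (w x * lam / real CC)"
      using vv_bound w_nonneg[OF x] lam_pos by (intro mult_right_mono) auto
    finally show "norm (vv x * of_real (w x * lam / real CC)) \<le> w x * (lam / real CC)" by simp
  qed
  have "infsum (\<lambda>x. al x * Dn x * vv x) St = infsum (\<lambda>x. al x * rho x + infsum (phi x) {..<length x}) St"
    by (rule infsum_cong) (simp add: E1)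
  also have "\<dots> = infsum (\<lambda>x. al x * rho x) St + S0"
    by (subst infsum_add[OF s_ar A1s]) (use A1 in simp)
  finally have L1: "infsum (\<lambda>x. al x * Dn x * vv x) St = infsum (\<lambda>x. al x * rho x) St + S0" .
  have "infsum (\<lambda>x. al x * Dn x * vv x) St
      = infsum (\<lambda>x. vv x * of_real (w x * lam / real CC) + infsum (psi x) ({..length x} \<times> Ty)) St"
    by (rule infsum_cong) (simp add: E2 fin2)
  also have "\<dots> = infsum (\<lambda>x. vv x * of_real (w x * lam / real CC)) St + S0"
    by (subst infsum_add[OF s_vw A2s]) (use A2 in simp)
  finally have L2: "infsum (\<lambda>x. al x * Dn x * vv x) St = infsum (\<lambda>x. vv x * of_real (w x * lam / real CC)) St + S0" .
  show ?thesis using L1 L2 by simp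
qed

end


context soj
begin

lemma wt_hT_eq: "wt hT V b = of_real (wt (\<lambda>_. cc) V b) * \<zeta> ^ count_list b T"
proof -
  have "wt hT V b = wt (\<lambda>_. complex_of_real cc) V b * \<zeta> ^ count_list b T"
    unfolding hT_def by (rule wt_count)
  also have "wt (\<lambda>_. complex_of_real cc) V b = of_real (wt (\<lambda>_. cc) V b)"
    by (rule wt_of_real[symmetric])
  finally show ?thesis .
qed

lemma Phi_has_sum: "(wt hT {} has_sum Phi hT Ty {}) St"
  unfolding St_def' by (rule CF[OF finite_Types Ty_elem cond_hT])

definition Sig3 where "Sig3 = Sigma St (\<lambda>y. {..length y})"

definition Phi3 :: "nat set list \<times> nat \<Rightarrow> complex" where
  "Phi3 z = \<zeta> ^ count_list (fst z) T *
     of_real (w (ins_at (snd z) T (fst z)) * svc_rate mu (ins_at (snd z) T (fst z)) (snd z))"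

definition Phi2 :: "nat set list \<times> nat set list \<Rightarrow> complex" where
  "Phi2 z = of_real (w (fst z @ T # snd z)) * \<zeta> ^ count_list (snd z) T * rho (fst z)"

lemma Phi3_has_sum: "(Phi3 has_sum (of_real (lam / real CC) * Phi hT Ty {})) Sig3"
  unfolding Sig3_def
proof (rule has_sum_Sigma_c[where g = "\<lambda>y. \<zeta> ^ count_list y T * of_real (w y * lam / real CC)"
      and gn = "\<lambda>y. norm \<zeta> ^ count_list y T * (w y * lam / real CC)"])
  fix y assume y: "y \<in> St"
  have yT: "set y \<subseteq> Ty" using y by (simp add: States_def)
  have pb: "(\<Sum>j\<le>length y. w (ins_at j T y) * svc_rate mu (ins_at j T y) j) = w y * lam / real CC"
    by (rule partial_bal[OF yT T])
  show "((\<lambda>j. Phi3 (y, j)) has_sum \<zeta> ^ count_list y T * of_real (w y * lam / real CC)) {..length y}"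
  proof (rule has_sum_finiteI)
    show "finite {..length y}" by simp
    show "\<zeta> ^ count_list y T * of_real (w y * lam / real CC) = (\<Sum>j\<le>length y. Phi3 (y, j))"
    proof -
      have "(\<Sum>j\<le>length y. Phi3 (y, j)) = \<zeta> ^ count_list y T *
          of_real (\<Sum>j\<le>length y. w (ins_at j T y) * svc_rate mu (ins_at j T y) j)"
        unfolding Phi3_def of_real_sum sum_distrib_left by simp
      then show ?thesis using pb by simp
    qed
  qed
  have nn: "w (ins_at j T y) * svc_rate mu (ins_at j T y) j \<ge> 0" for j
    using w_nonneg[OF ins_at_St[OF y T]] svc_rate_nonneg by simp
  show "((\<lambda>j. norm (Phi3 (y, j))) has_sum norm \<zeta> ^ count_list y T * (w y * lam / real CC)) {..length y}"
  proof (rule has_sum_finiteI)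
    show "finite {..length y}" by simp
    have "(\<Sum>j\<le>length y. norm (Phi3 (y, j)))
        = (\<Sum>j\<le>length y. norm \<zeta> ^ count_list y T * (w (ins_at j T y) * svc_rate mu (ins_at j T y) j))"
    proof (rule sum.cong[OF refl])
      fix j
      have a: "norm (of_real (w (ins_at j T y) * svc_rate mu (ins_at j T y) j) :: complex)
          = w (ins_at j T y) * svc_rate mu (ins_at j T y) j"
        unfolding norm_of_real using nn[of j] by simp
      show "norm (Phi3 (y, j)) = norm \<zeta> ^ count_list y T * (w (ins_at j T y) * svc_rate mu (ins_at j T y) j)"
        by (simp only: Phi3_def fst_conv snd_conv norm_mult norm_power a)
    qed
    also have "\<dots> = norm \<zeta> ^ count_list y T * (w y * lam / real CC)"
      by (simp add: sum_distrib_left[symmetric] pb)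
    finally show "norm \<zeta> ^ count_list y T * (w y * lam / real CC) = (\<Sum>j\<le>length y. norm (Phi3 (y, j)))" by simp
  qed
next
  have "((\<lambda>y. of_real (lam / real CC) * wt hT {} y) has_sum of_real (lam / real CC) * Phi hT Ty {}) St"
    by (rule has_sum_cmult_right[OF Phi_has_sum])
  moreover have eqf: "(\<lambda>y. of_real (lam / real CC) * wt hT {} y) = (\<lambda>y. \<zeta> ^ count_list y T * of_real (w y * lam / real CC))"
    by (rule ext) (simp add: wt_hT_eq w_def)
  ultimately show "((\<lambda>y. \<zeta> ^ count_list y T * of_real (w y * lam / real CC)) has_sum
      of_real (lam / real CC) * Phi hT Ty {}) St" by (simp only: eqf)
next
  show "(\<lambda>y. norm \<zeta> ^ count_list y T * (w y * lam / real CC)) summable_on St"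
  proof (rule summable_bound_b[where g = "\<lambda>y. w y * (lam / real CC)"])
    show "(\<lambda>y. w y * (lam / real CC)) summable_on St" by (rule summable_on_cmult_left[OF w_summ])
    fix y assume y: "y \<in> St"
    have a: "w y * lam / real CC \<ge> 0" using w_nonneg[OF y] lam_pos by simp
    have b: "norm \<zeta> ^ count_list y T \<le> 1" using zeta by (simp add: power_le_one)
    have "norm (norm \<zeta> ^ count_list y T * (w y * lam / real CC)) = norm \<zeta> ^ count_list y T * (w y * lam / real CC)"
      using a by (simp only: real_norm_def abs_mult power_abs abs_norm_cancel abs_of_nonneg)
    also have "\<dots> \<le> 1 * (w y * lam / real CC)" using a b by (intro mult_right_mono) auto
    finally show "norm (norm \<zeta> ^ count_list y T * (w y * lam / real CC)) \<le> w y * (lam / real CC)" by simp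
  qed
qed

lemma rho_alt: "rho x = of_real (mu * real (card (T - UU x)))"
  unfolding rho_def by (simp add: svc_rate_snoc_last)

lemma Phi2_has_sum: "(Phi2 has_sum (of_real (lam / real CC) * Phi hT Ty {})) (St \<times> St)"
proof -
  have "(Phi2 has_sum (of_real (lam / real CC) * Phi hT Ty {})) (St \<times> St)
      = (Phi3 has_sum (of_real (lam / real CC) * Phi hT Ty {})) Sig3"
    unfolding Sig3_def
  proof (rule has_sum_reindex_bij_witness[where j = "\<lambda>z. (fst z @ snd z, length (fst z))"
        and i = "\<lambda>z. (take (snd z) (fst z), drop (snd z) (fst z))"])
    fix a assume a: "a \<in> St \<times> St"
    obtain x b where ab: "a = (x, b)" by (cases a)
    show "(take (snd (fst a @ snd a, length (fst a))) (fst (fst a @ snd a, length (fst a))),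
           drop (snd (fst a @ snd a, length (fst a))) (fst (fst a @ snd a, length (fst a)))) = a"
      using ab by simp
    show "(fst a @ snd a, length (fst a)) \<in> Sigma St (\<lambda>y. {..length y})"
      using a ab by (auto simp: States_def)
    have x: "x \<in> St" using a ab by simp
    have ins: "ins_at (length x) T (x @ b) = x @ T # b" by (simp add: ins_at_def)
    have sr: "svc_rate mu (x @ T # b) (length x) = mu * real (card (T - UU x))"
      by (simp add: svc_rate_alt nth_append)
    show "Phi3 (fst a @ snd a, length (fst a)) = Phi2 a"
    proof (cases "T \<in> set x")
      case True
      then have "T - UU x = {}" by (auto simp: UU_def)
      then have "card (T - UU x) = 0" by (simp only: card.empty)
      then show ?thesis using ab by (simp add: Phi3_def Phi2_def ins sr rho_alt)
    next
      case False
      then have "count_list x T = 0" by (simp add: count_list_0_iff)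
      then show ?thesis using ab by (simp add: Phi3_def Phi2_def ins sr rho_alt mult_ac)
    qed
  next
    fix z assume z: "z \<in> Sigma St (\<lambda>y. {..length y})"
    then show "(fst (take (snd z) (fst z), drop (snd z) (fst z)) @ snd (take (snd z) (fst z), drop (snd z) (fst z)),
           length (fst (take (snd z) (fst z), drop (snd z) (fst z)))) = z"
      by (auto simp: min_def)
    have "set (fst z) \<subseteq> Ty" using z by (auto simp: States_def)
    then have "set (take (snd z) (fst z)) \<subseteq> Ty" "set (drop (snd z) (fst z)) \<subseteq> Ty"
      using set_take_subset[of "snd z" "fst z"] set_drop_subset[of "snd z" "fst z"] by blast+
    then show "(take (snd z) (fst z), drop (snd z) (fst z)) \<in> St \<times> St"
      by (simp add: States_def)
  qed simp
  then show ?thesis using Phi3_has_sum by simp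
qed

lemma inner_Phi2:
  assumes x: "x \<in> St"
  shows "infsum (\<lambda>b. Phi2 (x, b)) St = al x * rho x"
proof -
  have xT: "set (x @ [T]) \<subseteq> Ty" using snoc_St[OF x] by (simp add: States_def)
  have e: "Phi2 (x, b) = (of_real (w (x @ [T])) * rho x) * wt hT (UU (x @ [T])) b" for b
  proof -
    have "w (x @ T # b) = w (x @ [T]) * wt (\<lambda>_. cc) (UU (x @ [T])) b"
      using wt_append[of "\<lambda>_. cc" "{}" "x @ [T]" b] by (simp add: w_def)
    then show ?thesis by (simp add: Phi2_def wt_hT_eq mult_ac)
  qed
  have sm: "wt hT (UU (x @ [T])) summable_on St"
    by (rule wt_hT_summable[OF xT]) (simp add: UU_def)
  have "infsum (\<lambda>b. Phi2 (x, b)) St = (of_real (w (x @ [T])) * rho x) * R (UU (x @ [T]))"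
    unfolding e R_def by (rule infsum_cmult_right) (use sm in simp)
  then show ?thesis by (simp add: al_def mult_ac)
qed

lemma step4: "infsum (\<lambda>x. al x * rho x) St = of_real (lam / real CC) * Phi hT Ty {}"
proof -
  have sm: "(\<lambda>(x, b). Phi2 (x, b)) summable_on (Sigma St (\<lambda>_. St))"
    using Phi2_has_sum by (auto simp: summable_on_def)
  have "infsum (\<lambda>x. infsum (\<lambda>b. Phi2 (x, b)) St) St = infsum (\<lambda>(x, b). Phi2 (x, b)) (Sigma St (\<lambda>_. St))"
    by (rule infsum_Sigma'_banach[OF sm])
  also have "\<dots> = of_real (lam / real CC) * Phi hT Ty {}"
    using Phi2_has_sum by (simp add: infsumI)
  finally have "infsum (\<lambda>x. infsum (\<lambda>b. Phi2 (x, b)) St) St = of_real (lam / real CC) * Phi hT Ty {}" .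
  moreover have "infsum (\<lambda>x. infsum (\<lambda>b. Phi2 (x, b)) St) St = infsum (\<lambda>x. al x * rho x) St"
    by (rule infsum_cong) (simp add: inner_Phi2)
  ultimately show ?thesis by simp
qed

lemma vw_summ: "(\<lambda>x. of_real (w x) * vv x) summable_on St"
proof (rule summable_bound_b[OF w_summ])
  fix x assume x: "x \<in> St"
  show "norm (of_real (w x) * vv x) \<le> w x"
    using vv_bound[of x] w_nonneg[OF x] by (simp add: norm_mult mult_left_le)
qed

theorem main_disc: "infsum (\<lambda>x. of_real (w x) * vv x) St = Phi hT Ty {}"
proof -
  have L: "(of_real (lam / real CC) :: complex) \<noteq> 0" using lam_pos CC_pos by simp
  have sm: "(\<lambda>x. of_real (w x) * vv x) summable_on St"
  proof (rule summable_bound_b[OF w_summ])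
    fix x assume x: "x \<in> St"
    show "norm (of_real (w x) * vv x) \<le> w x"
      using vv_bound[of x] w_nonneg[OF x] by (simp add: norm_mult mult_left_le)
  qed
  have "infsum (\<lambda>x. vv x * of_real (w x * lam / real CC)) St
      = infsum (\<lambda>x. of_real (lam / real CC) * (of_real (w x) * vv x)) St"
    by (rule infsum_cong) (simp add: mult_ac)
  also have "\<dots> = of_real (lam / real CC) * infsum (\<lambda>x. of_real (w x) * vv x) St"
    by (rule infsum_cmult_right) (use sm in simp)
  finally have A: "infsum (\<lambda>x. vv x * of_real (w x * lam / real CC)) St
      = of_real (lam / real CC) * infsum (\<lambda>x. of_real (w x) * vv x) St" .
  have B: "infsum (\<lambda>x. vv x * of_real (w x * lam / real CC)) St = of_real (lam / real CC) * Phi hT Ty {}"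
    by (metis adjoint step4)
  have "of_real (lam / real CC) * infsum (\<lambda>x. of_real (w x) * vv x) St = of_real (lam / real CC) * Phi hT Ty {}"
    using A B by simp
  then show ?thesis using L by (metis mult_left_cancel)
qed

end


lemma prod_nth_shift:
  "(\<Prod>j=1..length ts. g (ts ! (j - 1))) = prod_list (map g ts)"
  for g :: "'a \<Rightarrow> 'b::comm_monoid_mult"
proof (induction ts)
  case Nil then show ?case by simp
next
  case (Cons t ts)
  have "(\<Prod>j=1..length (t # ts). g ((t # ts) ! (j - 1))) = g t * (\<Prod>j=Suc 1..Suc (length ts). g ((t # ts) ! (j - 1)))"
    by (subst prod.atLeast_Suc_atMost) simp_all
  also have "(\<Prod>j=Suc 1..Suc (length ts). g ((t # ts) ! (j - 1))) = (\<Prod>j=1..length ts. g (ts ! (j - 1)))"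
  proof (subst prod.atLeast_Suc_atMost_Suc_shift, rule prod.cong[OF refl])
    fix j assume "j \<in> {1..length ts}"
    then show "((\<lambda>j. g ((t # ts) ! (j - 1))) \<circ> Suc) j = g (ts ! (j - 1))" by (cases j) auto
  qed
  finally show ?case using Cons by simp
qed

lemma prod_e:
  assumes "distinct ts"
  shows "(\<Prod>j=1..length ts. (if ts ! (j - 1) = T then z else 1)) = (if T \<in> set ts then z else (1::'b::comm_monoid_mult))"
proof -
  have "(\<Prod>j=1..length ts. (if ts ! (j - 1) = T then z else 1)) = prod_list (map (\<lambda>a. if a = T then z else 1) ts)"
    by (rule prod_nth_shift)
  also have "\<dots> = prod (\<lambda>a. if a = T then z else 1) (set ts)"
    using assms by (rule prod.distinct_set_conv_list[symmetric])
  also have "\<dots> = (if T \<in> set ts then z else 1)" by simp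
  finally show ?thesis .
qed

context coc
begin

definition closedT :: "nat set \<Rightarrow> complex \<Rightarrow> real \<Rightarrow> complex" where
  "closedT t1 s p0 = (\<Sum>i=0..(K choose d). \<Sum>ts\<in>Tuples K d i.
              (complex_of_real lam - s * of_nat (K choose d) * (if t1 \<in> set ts then 1 else 0))
                / complex_of_real lam
              * (complex_of_real lam ^ i * complex_of_real p0 /
                 (\<Prod>j=1..i. complex_of_real (mu * real (K choose d) * real (F ts j))
                             - of_nat j * complex_of_real lam
                             + s * of_nat (K choose d) * (if t1 \<in> set (take j ts) then 1 else 0))))"

lemma perm_exists:
  assumes T: "T \<in> Ty" and t1: "t1 \<in> Ty"
  obtains \<sigma> :: "nat \<Rightarrow> nat" where "inj \<sigma>" "\<sigma> ` {..<K} = {..<K}" "\<sigma> ` T = t1"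
proof -
  have fT: "finite T" "finite t1" using T t1 by (auto intro: Ty_fin)
  obtain f1 where f1: "bij_betw f1 T t1"
    using finite_same_card_bij[OF fT] Types_card[OF T] Types_card[OF t1] by auto
  have c2: "card ({..<K} - T) = card ({..<K} - t1)"
    using Types_card[OF T] Types_card[OF t1] Types_sub[OF T] Types_sub[OF t1]
    by (simp add: card_Diff_subset fT)
  obtain f2 where f2: "bij_betw f2 ({..<K} - T) ({..<K} - t1)"
    using finite_same_card_bij[OF _ _ c2] by auto
  define \<sigma> where "\<sigma> x = (if x \<in> T then f1 x else if x \<in> {..<K} then f2 x else x)" for x
  have b1: "bij_betw \<sigma> T t1" using f1 by (rule bij_betw_cong[THEN iffD1, rotated]) (simp add: \<sigma>_def)
  have b2: "bij_betw \<sigma> ({..<K} - T) ({..<K} - t1)"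
    using f2 by (rule bij_betw_cong[THEN iffD1, rotated]) (simp add: \<sigma>_def)
  have b3: "bij_betw \<sigma> (- {..<K}) (- {..<K})"
  proof -
    have "bij_betw id (- {..<K}) (- {..<K})" by simp
    then show ?thesis by (rule bij_betw_cong[THEN iffD1, rotated]) (use Types_sub[OF T] in \<open>auto simp: \<sigma>_def\<close>)
  qed
  have b12: "bij_betw \<sigma> (T \<union> ({..<K} - T)) (t1 \<union> ({..<K} - t1))"
    by (rule bij_betw_combine[OF b1 b2]) auto
  have e1: "T \<union> ({..<K} - T) = {..<K}" "t1 \<union> ({..<K} - t1) = {..<K}"
    using Types_sub[OF T] Types_sub[OF t1] by auto
  have bK: "bij_betw \<sigma> {..<K} {..<K}" using b12 unfolding e1 .
  have "bij_betw \<sigma> ({..<K} \<union> - {..<K}) ({..<K} \<union> - {..<K})"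
    by (rule bij_betw_combine[OF bK b3]) auto
  moreover have u: "{..<K} \<union> - {..<K} = (UNIV::nat set)" by auto
  ultimately have "bij_betw \<sigma> UNIV UNIV" by (simp only: u)
  then have "bij \<sigma>" by (simp add: bij_def)
  then have "inj \<sigma>" by (rule bij_is_inj)
  moreover have "\<sigma> ` {..<K} = {..<K}" using bK by (simp add: bij_betw_def)
  moreover have "\<sigma> ` T = t1" using b1 by (simp add: bij_betw_def)
  ultimately show ?thesis using that by blast
qed

lemma closedT_sym:
  assumes T: "T \<in> Ty" and t1: "t1 \<in> Ty"
  shows "closedT T s p0 = closedT t1 s p0"
proof -
  obtain \<sigma> :: "nat \<Rightarrow> nat" where inj: "inj \<sigma>" and sK: "\<sigma> ` {..<K} = {..<K}" and sT: "\<sigma> ` T = t1"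
    using perm_exists[OF T t1] by blast
  define M where "M A = \<sigma> ` A" for A
  have injM: "inj M" unfolding M_def by (rule injI) (use inj inj_image_eq_iff in blast)
  have MTy: "M A \<in> Ty" if "A \<in> Ty" for A
  proof -
    have "M A \<subseteq> {..<K}" using Types_sub[OF that] sK unfolding M_def by blast
    moreover have "card (M A) = d" unfolding M_def using Types_card[OF that] inj
      by (simp add: card_image inj_on_subset)
    ultimately show ?thesis by (simp add: Types_def)
  qed
  have MT: "M T = t1" using sT by (simp add: M_def)
  have Fm: "F (map M ts) j = F ts j" for ts j
  proof -
    have "\<Union> (set (take j (map M ts))) = \<sigma> ` \<Union> (set (take j ts))"
      by (simp add: M_def take_map image_Union)
    then show ?thesis unfolding F_def using inj by (simp add: card_image inj_on_subset)
  qed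
  have mem: "t1 \<in> set (take j (map M ts)) \<longleftrightarrow> T \<in> set (take j ts)" for ts j
    unfolding take_map set_map MT[symmetric] using injM by (rule inj_image_mem_iff)
  have memall: "t1 \<in> set (map M ts) \<longleftrightarrow> T \<in> set ts" for ts
    unfolding set_map MT[symmetric] using injM by (rule inj_image_mem_iff)
  have memall': "t1 \<in> M ` set ts \<longleftrightarrow> T \<in> set ts" for ts
    using memall[of ts] by simp
  have tup: "map M ` Tuples K d i = Tuples K d i" for i
  proof (rule endo_inj_surj[OF finite_Tuples])
    show "map M ` Tuples K d i \<subseteq> Tuples K d i"
    proof
      fix ts assume "ts \<in> map M ` Tuples K d i"
      then obtain us where us: "ts = map M us" "us \<in> Tuples K d i" by blast
      have "set ts \<subseteq> Ty"
      proof
        fix a assume "a \<in> set ts"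
        then obtain b where "b \<in> set us" "a = M b" using us by auto
        moreover have "b \<in> Ty" using \<open>b \<in> set us\<close> us(2) by (auto simp: Tuples_def)
        ultimately show "a \<in> Ty" using MTy by blast
      qed
      moreover have "distinct ts" using us injM by (simp add: Tuples_def distinct_map inj_on_subset[OF injM])
      moreover have "length ts = i" using us by (simp add: Tuples_def)
      ultimately show "ts \<in> Tuples K d i" by (simp add: Tuples_def)
    qed
    show "inj_on (map M) (Tuples K d i)" using inj_mapI[OF injM] by (rule inj_on_subset) simp
  qed
  have injon: "inj_on (map M) (Tuples K d i)" for i using inj_mapI[OF injM] by (rule inj_on_subset) simp
  show ?thesis unfolding closedT_def
  proof (rule sum.cong[OF refl])
    fix i
    show "(\<Sum>ts\<in>Tuples K d i.
              (complex_of_real lam - s * of_nat (K choose d) * (if T \<in> set ts then 1 else 0))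
                / complex_of_real lam
              * (complex_of_real lam ^ i * complex_of_real p0 /
                 (\<Prod>j=1..i. complex_of_real (mu * real (K choose d) * real (F ts j))
                             - of_nat j * complex_of_real lam
                             + s * of_nat (K choose d) * (if T \<in> set (take j ts) then 1 else 0)))) =
          (\<Sum>ts\<in>Tuples K d i.
              (complex_of_real lam - s * of_nat (K choose d) * (if t1 \<in> set ts then 1 else 0))
                / complex_of_real lam
              * (complex_of_real lam ^ i * complex_of_real p0 /
                 (\<Prod>j=1..i. complex_of_real (mu * real (K choose d) * real (F ts j))
                             - of_nat j * complex_of_real lam
                             + s * of_nat (K choose d) * (if t1 \<in> set (take j ts) then 1 else 0))))"
      by (subst (2) tup[symmetric], subst sum.reindex[OF injon]) (simp add: Fm mem memall memall')
  qed
qed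

end


context soj
begin

lemma sum_hT:
  assumes "finite A"
  shows "(\<Sum>a\<in>A. hT a) = of_nat (card A) * of_real cc - (if T \<in> A then of_real cc * (1 - \<zeta>) else 0)"
proof -
  have "(\<Sum>a\<in>A. hT a) = (\<Sum>a\<in>A. of_real cc - (if a = T then of_real cc * (1 - \<zeta>) else 0))"
    by (intro sum.cong refl) (simp add: hT_def algebra_simps)
  also have "\<dots> = of_nat (card A) * of_real cc - (if T \<in> A then of_real cc * (1 - \<zeta>) else 0)"
    using assms by (simp add: sum_subtractf)
  finally show ?thesis .
qed

lemma svCC: "sv * of_nat CC = of_real lam * (1 - \<zeta>)"
  unfolding sv_def using CC_pos by simp

lemma closed_form_T: "of_real (p []) * Phi hT Ty {} = closedT T sv (p [])"
proof -
  have "of_real (p []) * Phi hT Ty {} = (\<Sum>i=0..(K choose d). \<Sum>ts\<in>Tuples K d i. of_real (p []) * tw hT {} ts)"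
    unfolding Phi_def by (simp add: sum_DT_Tuples sum_distrib_left)
  also have "\<dots> = closedT T sv (p [])"
    unfolding closedT_def
  proof (intro sum.cong refl)
    fix i ts assume ts: "ts \<in> Tuples K d i"
    have li: "length ts = i" and dts: "distinct ts" using ts by (auto simp: Tuples_def)
    define den where "den j = complex_of_real (mu * real (K choose d) * real (F ts j))
                             - of_nat j * complex_of_real lam
                             + sv * of_nat (K choose d) * (if T \<in> set (take j ts) then 1 else 0)" for j
    define e where "e j = (if ts ! (j - 1) = T then \<zeta> else 1)" for j
    have fac: "hT (ts ! (j - 1)) / (of_nat (card (\<Union>({} \<union> set (take j ts)))) - (\<Sum>a\<in>{} \<union> set (take j ts). hT a))
        = of_real lam * e j / den j" if j: "j \<in> {1..i}" for j
    proof -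
      have cj: "card (set (take j ts)) = j" using card_take_Tuples[OF ts] j by simp
      have k: "(of_real (mu * real CC) :: complex) \<noteq> 0" using mu_pos CC_pos by simp
      have l: "of_real cc * of_real (mu * real CC) = (of_real lam :: complex)"
        using cc_mu CC_pos by (simp add: field_simps flip: of_real_mult)
      have sh: "(\<Sum>a\<in>set (take j ts). hT a)
          = of_nat j * of_real cc - (if T \<in> set (take j ts) then of_real cc * (1 - \<zeta>) else 0)"
        using sum_hT[of "set (take j ts)"] cj by simp
      have hx: "hT (ts ! (j - 1)) = of_real cc * e j" by (simp add: hT_def e_def)
      have "hT (ts ! (j - 1)) / (of_nat (card (\<Union>({} \<union> set (take j ts)))) - (\<Sum>a\<in>{} \<union> set (take j ts). hT a))
          = (of_real cc * e j) / (of_nat (F ts j) - (of_nat j * of_real cc - (if T \<in> set (take j ts) then of_real cc * (1 - \<zeta>) else 0)))"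
        by (simp only: hx sh F_def Un_empty_left)
      also have "\<dots> = ((of_real cc * e j) * of_real (mu * real CC)) /
          ((of_nat (F ts j) - (of_nat j * of_real cc - (if T \<in> set (take j ts) then of_real cc * (1 - \<zeta>) else 0))) * of_real (mu * real CC))"
        using k by simp
      also have "(of_real cc * e j) * of_real (mu * real CC) = (of_real cc * of_real (mu * real CC)) * e j"
        by (simp add: algebra_simps)
      also have "(of_nat (F ts j) - (of_nat j * of_real cc - (if T \<in> set (take j ts) then of_real cc * (1 - \<zeta>) else 0))) * of_real (mu * real CC)
          = of_real (mu * real CC * real (F ts j)) - of_nat j * (of_real cc * of_real (mu * real CC))
            + (if T \<in> set (take j ts) then (of_real cc * of_real (mu * real CC)) * (1 - \<zeta>) else 0)"
        by (simp add: algebra_simps)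
      finally show ?thesis unfolding l den_def using svCC by (simp add: CC_def algebra_simps)
    qed
    have "tw hT {} ts = (\<Prod>j=1..i. of_real lam * e j / den j)"
      unfolding tw_prod li using fac by (intro prod.cong refl) auto
    also have "\<dots> = of_real lam ^ i * (\<Prod>j=1..i. e j) / (\<Prod>j=1..i. den j)"
      by (simp add: prod_dividef prod.distrib)
    also have "(\<Prod>j=1..i. e j) = (if T \<in> set ts then \<zeta> else 1)"
      unfolding e_def li[symmetric] by (rule prod_e[OF dts])
    also have "(if T \<in> set ts then \<zeta> else 1) =
        (complex_of_real lam - sv * of_nat (K choose d) * (if T \<in> set ts then 1 else 0)) / complex_of_real lam"
      using svCC lam_pos by (auto simp: CC_def field_simps)
    finally show "of_real (p []) * tw hT {} ts =
        (complex_of_real lam - sv * of_nat (K choose d) * (if T \<in> set ts then 1 else 0)) / complex_of_real lam *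
        (complex_of_real lam ^ i * complex_of_real (p []) / (\<Prod>j=1..i. den j))"
      by simp
  qed
  finally show ?thesis .
qed

end

context coc
begin

lemma soj_inst:
  assumes st: "stationary_dist K d lam mu p" and T: "T \<in> Ty"
    and sd: "norm (s - of_real (lam / real CC)) < lam / real CC"
  shows "soj K d lam mu p T (1 - s * of_nat CC / of_real lam)"
    and "soj.sv K d lam (1 - s * of_nat CC / of_real lam) = s"
proof -
  have L: "lam / real CC > 0" using lam_pos CC_pos by simp
  have "1 - s * of_nat CC / of_real lam = - (s - of_real (lam / real CC)) * (of_nat CC / of_real lam)"
    using lam_pos CC_pos by (simp add: field_simps)
  then have "norm (1 - s * of_nat CC / of_real lam) = norm (s - of_real (lam / real CC)) * (real CC / lam)"
    using lam_pos by (simp add: norm_mult norm_divide norm_minus_commute)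
  also have "\<dots> < (lam / real CC) * (real CC / lam)"
    using sd lam_pos CC_pos by (intro mult_strict_right_mono) auto
  also have "\<dots> = 1" using lam_pos CC_pos by simp
  finally have z: "norm (1 - s * of_nat CC / of_real lam) < 1" .
  show "soj K d lam mu p T (1 - s * of_nat CC / of_real lam)"
    by (rule soj.intro[OF coc_axioms]) (unfold_locales, fact st, fact T, fact z)
  show "soj.sv K d lam (1 - s * of_nat CC / of_real lam) = s"
    unfolding soj.sv_def[OF \<open>soj K d lam mu p T (1 - s * of_nat CC / of_real lam)\<close>]
    using lam_pos CC_pos by (simp add: field_simps)
qed

theorem sojourn_disc:
  assumes st: "stationary_dist K d lam mu p" and t1: "t1 \<in> Ty"
    and sd: "norm (s - of_real (lam / real CC)) < lam / real CC"
  shows "sojourn_LST K d mu p s = closedT t1 s (p [])"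
proof -
  have u: "\<forall>x\<in>St. p x = p [] * w x" by (rule uniqueness[OF st])
  define c where "c = complex_of_real (p []) / of_nat CC"
  have each: "((\<lambda>x. c * (of_real (w x) * tagged_lt mu s (x @ [T]))) has_sum c * (closedT T s (p []) / of_real (p []))) St"
    if T: "T \<in> Ty" for T
  proof -
    interpret S: soj K d lam mu p T "1 - s * of_nat CC / of_real lam" by (rule soj_inst(1)[OF st T sd])
    have sv: "S.sv = s" by (rule soj_inst(2)[OF st T sd])
    have p0: "p [] > 0" using p0_pos_w_sum(1)[OF st] .
    have h: "((\<lambda>x. of_real (w x) * S.vv x) has_sum Phi S.hT Ty {}) St"
      using S.vw_summ S.main_disc by (simp add: summable_iff_has_sum_infsum)
    have e: "Phi S.hT Ty {} = closedT T s (p []) / of_real (p [])"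
      using S.closed_form_T p0 unfolding sv by (simp add: field_simps)
    show ?thesis using has_sum_cmult_right[OF h, of c] unfolding e S.vv_def sv .
  qed
  have "sojourn_LST K d mu p s = infsum (\<lambda>x. \<Sum>T\<in>Ty. c * (of_real (w x) * tagged_lt mu s (x @ [T]))) St"
    unfolding sojourn_LST_def
  proof (rule infsum_cong)
    fix x assume "x \<in> St"
    then have "p x = p [] * w x" using u by auto
    then show "complex_of_real (p x) * ((\<Sum>T\<in>Ty. tagged_lt mu s (x @ [T])) / of_nat (K choose d))
        = (\<Sum>T\<in>Ty. c * (of_real (w x) * tagged_lt mu s (x @ [T])))"
      by (simp add: c_def CC_def sum_distrib_left sum_divide_distrib mult_ac)
  qed
  also have "\<dots> = (\<Sum>T\<in>Ty. c * (closedT T s (p []) / of_real (p [])))"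
    by (rule infsumI, rule has_sum_finite_sum[OF finite_Types each])
  also have "\<dots> = (\<Sum>T\<in>Ty. c * (closedT t1 s (p []) / of_real (p [])))"
    by (intro sum.cong refl) (simp add: closedT_sym[OF _ t1])
  also have "\<dots> = closedT t1 s (p [])"
    using p0_pos_w_sum(1)[OF st] CC_pos by (simp add: card_Ty c_def)
  finally show ?thesis .
qed

end


context coc
begin

abbreviation "HH \<equiv> {s::complex. Re s > 0}"

lemma St_countable: "countable St"
proof -
  have "St = lists Ty" by (simp add: States_def lists_eq_set)
  then show ?thesis using countable_finite[OF finite_Types] by simp
qed

lemma St_infinite: "infinite St"
proof -
  have "Ty \<noteq> {}" using card_Ty CC_pos by auto
  then obtain T0 where T0: "T0 \<in> Ty" by auto
  have inj: "inj (\<lambda>n. replicate n T0)" by (rule injI) (metis length_replicate)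
  have "range (\<lambda>n. replicate n T0) \<subseteq> St" using T0 by (auto simp: States_def)
  moreover have "infinite (range (\<lambda>n. replicate n T0))" by (rule range_inj_infinite[OF inj])
  ultimately show ?thesis using infinite_super by blast
qed

definition gg :: "(nat set list \<Rightarrow> real) \<Rightarrow> nat set list \<Rightarrow> complex \<Rightarrow> complex" where
  "gg p x s = complex_of_real (p x) * ((\<Sum>T\<in>Ty. tagged_lt mu s (x @ [T])) / of_nat (K choose d))"

lemma gg_bound:
  assumes "Re s > 0" "p x \<ge> 0"
  shows "norm (gg p x s) \<le> p x"
proof -
  have "norm (\<Sum>T\<in>Ty. tagged_lt mu s (x @ [T])) \<le> (\<Sum>T\<in>Ty. norm (tagged_lt mu s (x @ [T])))"
    by (rule norm_sum)
  also have "\<dots> \<le> (\<Sum>T\<in>Ty. 1)" by (intro sum_mono tl_bound[OF assms(1)])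
  also have "\<dots> = real (K choose d)" by (simp add: card_Types)
  finally have a: "norm (\<Sum>T\<in>Ty. tagged_lt mu s (x @ [T])) \<le> real (K choose d)" .
  have c: "real (K choose d) > 0" using CC_pos by (simp add: CC_def)
  have "norm (gg p x s) = p x * (norm (\<Sum>T\<in>Ty. tagged_lt mu s (x @ [T])) / real (K choose d))"
    unfolding gg_def using assms(2) by (simp add: norm_mult norm_divide)
  also have "\<dots> \<le> p x * 1"
    using a c assms(2) by (intro mult_left_mono) (auto simp: field_simps)
  finally show ?thesis by simp
qed

lemma gg_holo: "gg p x holomorphic_on HH"
  unfolding gg_def by (intro holomorphic_intros tl_holo) (use CC_pos in \<open>auto simp: CC_def\<close>)

lemma LST_holo:
  assumes st: "stationary_dist K d lam mu p"
  shows "(\<lambda>s. sojourn_LST K d mu p s) holomorphic_on HH"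
proof -
  define e where "e = from_nat_into St"
  have bij: "bij_betw e UNIV St" unfolding e_def by (rule bij_betw_from_nat_into[OF St_countable St_infinite])
  have pn: "\<forall>x\<in>St. p x \<ge> 0" and ps: "(p has_sum 1) St" using st by (auto simp: stationary_dist_def)
  have eSt: "e n \<in> St" for n using bij by (auto simp: bij_betw_def)
  have pe_summ: "(\<lambda>n. p (e n)) summable_on UNIV"
    using summable_on_reindex_bij_betw[OF bij, of p] ps by (auto simp: summable_on_def)
  have pe: "summable (\<lambda>n. p (e n))"
    using pe_summ summable_on_UNIV_nonneg_real_iff[of "\<lambda>n. p (e n)"] pn eSt by auto
  define G where "G s = suminf (\<lambda>i. gg p (e i) s)" for s
  have eqG: "sojourn_LST K d mu p s = G s" if s: "s \<in> HH" for s
  proof -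
    have sm: "(\<lambda>n. gg p (e n) s) summable_on UNIV"
    proof (rule summable_bound_b[OF pe_summ])
      fix n show "norm (gg p (e n) s) \<le> p (e n)" using gg_bound[of s p "e n"] s pn eSt by auto
    qed
    have "sojourn_LST K d mu p s = infsum (\<lambda>x. gg p x s) St"
      unfolding sojourn_LST_def gg_def by simp
    also have "\<dots> = infsum (\<lambda>n. gg p (e n) s) UNIV"
      by (rule infsum_reindex_bij_betw[OF bij, symmetric])
    also have "\<dots> = G s"
      unfolding G_def using has_sum_imp_sums[OF has_sum_infsum[OF sm]] by (simp add: sums_iff)
    finally show ?thesis .
  qed
  have "G holomorphic_on HH"
  proof (rule holomorphic_uniform_sequence[where f = "\<lambda>n s. \<Sum>i<n. gg p (e i) s"])
    show "open HH" by (rule open_halfspace_Re_gt)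
    fix n show "(\<lambda>s. \<Sum>i<n. gg p (e i) s) holomorphic_on HH"
      by (intro holomorphic_on_sum gg_holo)
  next
    fix x assume x: "x \<in> HH"
    define r where "r = Re x / 2"
    have r: "r > 0" using x by (simp add: r_def)
    have sub: "cball x r \<subseteq> HH"
    proof
      fix z assume "z \<in> cball x r"
      then have "norm (x - z) \<le> r" by (simp add: dist_norm)
      moreover have "Re x - Re z \<le> norm (x - z)" using complex_Re_le_cmod[of "x - z"] by simp
      ultimately show "z \<in> HH" using r by (simp add: r_def)
    qed
    have "uniform_limit (cball x r) (\<lambda>n s. \<Sum>i<n. gg p (e i) s) (\<lambda>s. suminf (\<lambda>i. gg p (e i) s)) sequentially"
    proof (rule Weierstrass_m_test[OF _ pe])
      fix n z assume "z \<in> cball x r"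
      then have "z \<in> HH" using sub by blast
      then show "norm (gg p (e n) z) \<le> p (e n)" using gg_bound[of z p "e n"] pn eSt by auto
    qed
    then show "\<exists>d>0. cball x d \<subseteq> HH \<and> uniform_limit (cball x d) (\<lambda>n s. \<Sum>i<n. gg p (e i) s) G sequentially"
      using r sub unfolding G_def by blast
  qed
  then show ?thesis by (rule holomorphic_transform) (use eqG in auto)
qed

lemma den_pos:
  assumes st: "stationary_dist K d lam mu p" and ts: "ts \<in> Tuples K d i" and j: "j \<in> {1..i}"
  shows "real j * lam < mu * real (K choose d) * real (F ts j)"
proof -
  have A: "set (take j ts) \<subseteq> Ty" by (rule set_take_Tuples[OF ts])
  have cj: "card (set (take j ts)) = j" using card_take_Tuples[OF ts] j by simp
  have "set (take j ts) \<noteq> {}" using cj j by auto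
  then have "real (card (set (take j ts))) * cc < real (card (\<Union>(set (take j ts))))"
    by (rule stability_cond[OF st A])
  then have "real j * cc < real (F ts j)" using cj by (simp add: F_def)
  then have "real j * cc * (mu * real CC) < real (F ts j) * (mu * real CC)"
    using mu_pos CC_pos by (intro mult_strict_right_mono) auto
  moreover have "real j * cc * (mu * real CC) = real j * lam"
  proof -
    have "cc * (mu * real CC) = lam" using cc_mu CC_pos by (simp add: field_simps)
    then show ?thesis by (simp add: mult.assoc)
  qed
  ultimately have "real j * lam < real (F ts j) * (mu * real CC)" by linarith
  then show ?thesis by (simp add: CC_def mult_ac)
qed

lemma closed_holo:
  assumes st: "stationary_dist K d lam mu p"
  shows "(\<lambda>s. closedT t1 s (p [])) holomorphic_on HH"
  unfolding closedT_def
proof (intro holomorphic_on_sum)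
  fix i ts assume i: "i \<in> {0..K choose d}" and ts: "ts \<in> Tuples K d i"
  have nz: "(\<Prod>j=1..i. complex_of_real (mu * real (K choose d) * real (F ts j))
                             - of_nat j * complex_of_real lam
                             + s * of_nat (K choose d) * (if t1 \<in> set (take j ts) then 1 else 0)) \<noteq> 0"
    if s: "s \<in> HH" for s
  proof -
    have "complex_of_real (mu * real (K choose d) * real (F ts j)) - of_nat j * complex_of_real lam
          + s * of_nat (K choose d) * (if t1 \<in> set (take j ts) then 1 else 0) \<noteq> 0" if j: "j \<in> {1..i}" for j
    proof -
      have "Re (complex_of_real (mu * real (K choose d) * real (F ts j)) - of_nat j * complex_of_real lam
          + s * of_nat (K choose d) * (if t1 \<in> set (take j ts) then 1 else 0))
          = mu * real (K choose d) * real (F ts j) - real j * lam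
            + Re s * real (K choose d) * (if t1 \<in> set (take j ts) then 1 else 0)"
        by simp
      also have "\<dots> > 0"
        using den_pos[OF st ts j] s by (auto intro: add_pos_nonneg)
      finally have R: "Re (complex_of_real (mu * real (K choose d) * real (F ts j)) - of_nat j * complex_of_real lam
          + s * of_nat (K choose d) * (if t1 \<in> set (take j ts) then 1 else 0)) > 0" .
      show ?thesis
      proof
        assume "complex_of_real (mu * real (K choose d) * real (F ts j)) - of_nat j * complex_of_real lam
          + s * of_nat (K choose d) * (if t1 \<in> set (take j ts) then 1 else 0) = 0"
        then show False using R by simp
      qed
    qed
    then show ?thesis by (subst prod_zero_iff) auto
  qed
  have lz: "complex_of_real lam \<noteq> 0" using lam_pos by simp
  show "(\<lambda>s. (complex_of_real lam - s * of_nat (K choose d) * (if t1 \<in> set ts then 1 else 0))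
                / complex_of_real lam
              * (complex_of_real lam ^ i * complex_of_real (p []) /
                 (\<Prod>j=1..i. complex_of_real (mu * real (K choose d) * real (F ts j))
                             - of_nat j * complex_of_real lam
                             + s * of_nat (K choose d) * (if t1 \<in> set (take j ts) then 1 else 0)))) holomorphic_on HH"
    by (intro holomorphic_intros nz lz)
qed

theorem sojourn_all:
  assumes st: "stationary_dist K d lam mu p" and t1: "t1 \<in> Ty" and s: "Re s > 0"
  shows "sojourn_LST K d mu p s = closedT t1 s (p [])"
proof (rule analytic_continuation_open[where s = "ball (of_real (lam / real CC)) (lam / real CC)" and s' = HH
      and f = "\<lambda>s. sojourn_LST K d mu p s" and g = "\<lambda>s. closedT t1 s (p [])"])
  show "open (ball (complex_of_real (lam / real CC)) (lam / real CC))" by simp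
  show "open HH" by (rule open_halfspace_Re_gt)
  have lp: "lam / real CC > 0" using lam_pos CC_pos by simp
  then show "ball (complex_of_real (lam / real CC)) (lam / real CC) \<noteq> {}"
    by simp
  show "connected HH" by (rule convex_connected[OF convex_halfspace_Re_gt])
  show "ball (complex_of_real (lam / real CC)) (lam / real CC) \<subseteq> HH"
  proof
    fix z assume "z \<in> ball (complex_of_real (lam / real CC)) (lam / real CC)"
    then have "norm (of_real (lam / real CC) - z) < lam / real CC" by (simp add: dist_norm)
    moreover have "lam / real CC - Re z \<le> norm (of_real (lam / real CC) - z)"
      using complex_Re_le_cmod[of "of_real (lam / real CC) - z"] by simp
    ultimately show "z \<in> HH" by simp
  qed
  show "(\<lambda>s. sojourn_LST K d mu p s) holomorphic_on HH" by (rule LST_holo[OF st])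
  show "(\<lambda>s. closedT t1 s (p [])) holomorphic_on HH" by (rule closed_holo[OF st])
  fix z assume "z \<in> ball (complex_of_real (lam / real CC)) (lam / real CC)"
  then have "norm (z - of_real (lam / real CC)) < lam / real CC" by (simp add: dist_norm norm_minus_commute)
  then show "sojourn_LST K d mu p z = closedT t1 z (p [])" by (rule sojourn_disc[OF st t1])
next
  show "s \<in> HH" using s by simp
qed

end

theorem mainTheorem11:
  fixes K d :: nat and lam mu :: real and p :: "nat set list \<Rightarrow> real"
    and z s :: complex and t1 :: "nat set"
  assumes "1 \<le> d" and "d \<le> K" and "lam > 0" and "mu > 0"
    and "stationary_dist K d lam mu p"
    and "t1 \<in> Types K d"
    and "norm z < 1" and "Re s > 0"
  shows "gen_fun_M K d p z =
           (\<Sum>i=0..(K choose d). \<Sum>ts\<in>Tuples K d i.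
              (complex_of_real lam * z) ^ i * complex_of_real (p []) /
              (\<Prod>j=1..i. complex_of_real (mu * real (K choose d) * real (F ts j))
                          - of_nat j * complex_of_real lam * z))
       \<and> sojourn_LST K d mu p s =
           (\<Sum>i=0..(K choose d). \<Sum>ts\<in>Tuples K d i.
              (complex_of_real lam - s * of_nat (K choose d) * (if t1 \<in> set ts then 1 else 0))
                / complex_of_real lam
              * (complex_of_real lam ^ i * complex_of_real (p []) /
                 (\<Prod>j=1..i. complex_of_real (mu * real (K choose d) * real (F ts j))
                             - of_nat j * complex_of_real lam
                             + s * of_nat (K choose d) * (if t1 \<in> set (take j ts) then 1 else 0))))"
proof -
  interpret coc K d lam mu by (unfold_locales) (use assms in auto)
  show ?thesis
    using genfun[OF assms(5,7)] sojourn_all[OF assms(5,6,8)] unfolding closedT_def by simp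
qed


end
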